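(* Let $n\ge 3$, let $\Omega \subset \mathbb{R}^n$ be an open subset with diameter $R$, fix $k \in \{1,\ldots, n-1\}$ and let $E \Subset \Omega$ be a compact subset satisfying $\mathscr{H}_\Psi(E) < \infty$, where \[ \Psi(t) = \begin{cases} Rt & \text{if } k=1, \\ t^2 |\log(R/t)| & \text{if } k=2, \\ t^2 & \text{if } k \ge 3. \end{cases} \] Fix $h \in [0,\infty)$ satisfying $hR < k$. Then there exists a constant $C_1= C_1(n,k,hR)$ with the following property: for each $Q \in (\mathscr{H}_\Psi(E), \infty)$ there exist a relatively compact open set $U$ containing $E$ and a function $w \in C^2(\overline\Omega)$ such that $w < 0$ on $\overline{\Omega}$ and \[ \mathscr{F}_k^-[w] \ge \mathbb{1}_{U} \ \text{ on } \Omega, \qquad \|w\|_\infty \le C_1 Q. \] In particular, \[ \mathscr{F}_k^-[w] + \frac{1}{C_1 Q} w \ge 0 \ \text{ on } U, \qquad \mathscr{F}_k^-[w] \ge 0 \ \text{ on } \Omega, \] and \[ \bar{\mu}(\mathscr{F}_k^-,E) \ge \frac{1}{C_1\mathscr{H}_\Psi(E)}. \]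
   Context: For a symmetric matrix $A$ with eigenvalues $\lambda_1(A)\le\dots\le\lambda_n(A)$, $\mathcal{P}_k^-(A)=\lambda_1(A)+\dots+\lambda_k(A)$, and $\mathscr{F}_k^-[w] = \mathcal{P}_k^-(\nabla^2 w) - h|\nabla w|$. $\mathbb{1}_U$ is the indicator function of $U$. For an open set $V\subset\mathbb{R}^n$, $\bar\mu(\mathscr{F}_k^-,V) = \sup\{c\in\mathbb{R} : \exists\, w \in \mathrm{USC}(\overline V),\ w<0 \text{ on } \overline V,\ \mathscr{F}_k^-[w]+cw\ge 0 \text{ in the viscosity sense on } V\}$, and for a set $E$, $\bar\mu(\mathscr{F}_k^-,E)=\sup\{\bar\mu(\mathscr{F}_k^-,V): V \text{ open}, E\subset V\}$. Generalized Hausdorff measure: $\mathscr{H}_\Psi(E) = \lim_{\delta\to 0^+}\inf\{\sum_j \Psi(r_j) : E\subset \bigcup_{j} B_{r_j}(x_j),\ r_j\le\delta\}$; the convention $1/0=+\infty$ is used. *)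

theory Defs
  imports "HOL-Analysis.Analysis" "HOL-Library.Multiset"
begin

definition eig_mset :: "real^'n^'n \<Rightarrow> real multiset" where
  "eig_mset A = (THE M. size M = CARD('n) \<and>
      (\<forall>t::real. det (mat t - A) = (\<Prod>l\<in>#M. t - l)))"

definition Pkminus :: "nat \<Rightarrow> real^'n^'n \<Rightarrow> real" where
  "Pkminus k A = sum_list (take k (sorted_list_of_multiset (eig_mset A)))"

(* F_k^-[w] at a point, given gradient p and Hessian X of w there *)
definition Fk :: "nat \<Rightarrow> real \<Rightarrow> real^'n^'n \<Rightarrow> real^'n \<Rightarrow> real" where
  "Fk k h X p = Pkminus k X - h * norm p"

definition C2_on :: "(real^'n) set \<Rightarrow> (real^'n \<Rightarrow> real) \<Rightarrow> (real^'n \<Rightarrow> real^'n)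
     \<Rightarrow> (real^'n \<Rightarrow> real^'n^'n) \<Rightarrow> bool" where
  "C2_on S w g H \<longleftrightarrow>
     (\<forall>x\<in>S. (w has_derivative (\<lambda>v. g x \<bullet> v)) (at x) \<and>
             (g has_derivative (\<lambda>v. H x *v v)) (at x)) \<and>
     continuous_on S H"

definition C2_closure :: "(real^'n) set \<Rightarrow> (real^'n \<Rightarrow> real) \<Rightarrow> (real^'n \<Rightarrow> real^'n)
     \<Rightarrow> (real^'n \<Rightarrow> real^'n^'n) \<Rightarrow> bool" where
  "C2_closure \<Omega> w g H \<longleftrightarrow> C2_on \<Omega> w g H \<and>
     continuous_on (closure \<Omega>) w \<and> continuous_on (closure \<Omega>) g \<and>
     continuous_on (closure \<Omega>) H"

definition usc_on :: "'a::metric_space set \<Rightarrow> ('a \<Rightarrow> real) \<Rightarrow> bool" where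
  "usc_on S w \<longleftrightarrow> (\<forall>x\<in>S. \<forall>a. w x < a \<longrightarrow>
      (\<exists>e>0. \<forall>y\<in>S. dist y x < e \<longrightarrow> w y < a))"

definition visc_sub :: "nat \<Rightarrow> real \<Rightarrow> real \<Rightarrow> (real^'n) set \<Rightarrow> (real^'n \<Rightarrow> real) \<Rightarrow> bool" where
  "visc_sub k h c V w \<longleftrightarrow>
     (\<forall>x\<in>V. \<forall>\<phi> g H r. r > 0 \<and> ball x r \<subseteq> V \<and> C2_on (ball x r) \<phi> g H \<and>
        (\<forall>y\<in>ball x r. w y \<le> \<phi> y) \<and> \<phi> x = w x
        \<longrightarrow> Fk k h (H x) (g x) + c * w x \<ge> 0)"

definition mu_open :: "nat \<Rightarrow> real \<Rightarrow> (real^'n) set \<Rightarrow> ereal" where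
  "mu_open k h V = Sup (ereal ` {c. \<exists>w. usc_on (closure V) w \<and>
        (\<forall>x\<in>closure V. w x < 0) \<and> visc_sub k h c V w})"

definition mu_set :: "nat \<Rightarrow> real \<Rightarrow> (real^'n) set \<Rightarrow> ereal" where
  "mu_set k h E = (SUP V\<in>{V. open V \<and> E \<subseteq> V}. mu_open k h V)"

(* generalized Hausdorff measure H_\<Psi>; the limit \<delta> \<rightarrow> 0+ of the (monotone in \<delta>)
   infimum is written as the supremum over \<delta> > 0 *)
definition gen_hausdorff :: "(real \<Rightarrow> real) \<Rightarrow> 'a::metric_space set \<Rightarrow> ennreal" where
  "gen_hausdorff \<Psi> E = (SUP \<delta>\<in>{0::real<..}.
      INF rc\<in>{(r, c). (\<forall>j::nat. 0 < r j \<and> r j \<le> \<delta>) \<and> E \<subseteq> (\<Union>j. ball (c j) (r j))}.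
        (\<Sum>j. ennreal (\<Psi> (fst rc j))))"

definition Psi :: "nat \<Rightarrow> real \<Rightarrow> real \<Rightarrow> real" where
  "Psi k R t = (if k = 1 then R * t else if k = 2 then t^2 * \<bar>ln (R / t)\<bar> else t^2)"

end

theory Submission
  imports Defs "HOL-Computational_Algebra.Polynomial"
begin

lemma sym_inner:
  fixes A :: "real^'n^'n"
  assumes "transpose A = A"
  shows "x \<bullet> (A *v y) = (A *v x) \<bullet> y"
proof -
  have "x \<bullet> (A *v y) = (x v* A) \<bullet> y" by (simp add: dot_lmul_matrix)
  also have "x v* A = transpose A *v x" by simp
  finally show ?thesis using assms by simp
qed

lemma min_eig:
  fixes A :: "real^'n^'n"
  assumes symA: "transpose A = A" and S: "subspace S" and inv: "\<forall>x\<in>S. A *v x \<in> S"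
    and vS: "v \<in> S" and nv: "norm v = 1"
    and mn: "\<forall>y\<in>S. norm y = 1 \<longrightarrow> v \<bullet> (A *v v) \<le> y \<bullet> (A *v y)"
  shows "A *v v = (v \<bullet> (A *v v)) *\<^sub>R v"
proof -
  define l where "l = v \<bullet> (A *v v)"
  have vv: "v \<bullet> v = 1" using nv by (simp add: dot_square_norm)
  have hom: "l * (z \<bullet> z) \<le> z \<bullet> (A *v z)" if zS: "z \<in> S" for z
  proof (cases "z = 0")
    case True then show ?thesis by simp
  next
    case False
    define y where "y = (1 / norm z) *\<^sub>R z"
    have "y \<in> S" using zS S by (simp add: y_def subspace_scale)
    moreover have "norm y = 1" using False by (simp add: y_def)
    ultimately have "l \<le> y \<bullet> (A *v y)" using mn l_def by blast
    also have "y \<bullet> (A *v y) = (z \<bullet> (A *v z)) / (norm z)^2"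
      by (simp add: y_def matrix_vector_mult_scaleR power2_eq_square)
    finally have "l * (norm z)^2 \<le> z \<bullet> (A *v z)"
      using False by (simp add: pos_le_divide_eq)
    then show ?thesis by (simp add: dot_square_norm)
  qed
  define y where "y = A *v v - l *\<^sub>R v"
  have yS: "y \<in> S" using inv vS S by (simp add: y_def subspace_diff subspace_scale)
  have vy: "v \<bullet> y = 0" by (simp add: y_def l_def inner_diff_right vv)
  have yAv: "y \<bullet> (A *v v) = y \<bullet> y"
    by (simp add: y_def inner_diff_left inner_diff_right l_def vv inner_commute)
  have vAy: "v \<bullet> (A *v y) = y \<bullet> y"
    using sym_inner[OF symA, of v y] yAv by (simp add: inner_commute)
  define c where "c = y \<bullet> (A *v y) - l * (y \<bullet> y)"
  have key: "0 \<le> 2 * t * (y \<bullet> y) + t^2 * c" for t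
  proof -
    have "v + t *\<^sub>R y \<in> S" using vS yS S by (simp add: subspace_add subspace_scale)
    note h1 = hom[OF this]
    have e1: "(v + t *\<^sub>R y) \<bullet> (v + t *\<^sub>R y) = 1 + t^2 * (y \<bullet> y)"
      by (simp add: inner_add_left inner_add_right vv vy inner_commute power2_eq_square)
    have e2: "(v + t *\<^sub>R y) \<bullet> (A *v (v + t *\<^sub>R y)) = l + 2 * t * (y \<bullet> y) + t^2 * (y \<bullet> (A *v y))"
      by (simp add: matrix_vector_right_distrib matrix_vector_mult_scaleR inner_add_left inner_add_right
          l_def yAv vAy power2_eq_square algebra_simps)
    have "l * (1 + t^2 * (y \<bullet> y)) \<le> l + 2 * t * (y \<bullet> y) + t^2 * (y \<bullet> (A *v y))"
      using h1 unfolding e1 e2 .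
    then show ?thesis by (simp add: c_def algebra_simps)
  qed
  have "y \<bullet> y = 0"
  proof (rule ccontr)
    assume ne: "y \<bullet> y \<noteq> 0"
    then have pos: "y \<bullet> y > 0" using inner_ge_zero[of y] by linarith
    define d where "d = \<bar>c\<bar> + 1"
    define Y where "Y = y \<bullet> y"
    define t where "t = - Y / d"
    have d: "d > 0" by (simp add: d_def)
    have "0 \<le> 2 * t * Y + t^2 * c" unfolding Y_def by (rule key)
    also have "2 * t * Y + t^2 * c = Y^2 / d * (-2 + c / d)"
      using d by (simp add: t_def field_simps power2_eq_square)
    also have "\<dots> < 0"
    proof -
      have "c / d < 1" using d by (simp add: divide_less_eq d_def)
      moreover have "Y^2 / d > 0" using pos d by (simp add: Y_def)
      moreover have "-2 + c / d < 0" using calculation by linarith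
      ultimately show ?thesis using mult_pos_neg by blast
    qed
    finally show False by simp
  qed
  then have "y = 0" by simp
  then show ?thesis by (simp add: y_def l_def)
qed

lemma spectral_subspace:
  fixes A :: "real^'n^'n"
  assumes symA: "transpose A = A"
  shows "subspace S \<Longrightarrow> (\<forall>x\<in>S. A *v x \<in> S) \<Longrightarrow> \<exists>B. finite B \<and> B \<subseteq> S \<and> span B = S \<and>
     pairwise orthogonal B \<and> (\<forall>b\<in>B. norm b = 1 \<and> A *v b = (b \<bullet> (A *v b)) *\<^sub>R b)"
proof (induction "dim S" arbitrary: S rule: less_induct)
  case less
  show ?case
  proof (cases "S = {0}")
    case True
    then show ?thesis by (intro exI[of _ "{}"]) auto
  next
    case False
    then obtain x where xS: "x \<in> S" and x0: "x \<noteq> 0" using less.prems subspace_0 by blast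
    define K where "K = S \<inter> sphere 0 1"
    have cK: "compact K" unfolding K_def
      using closed_subspace[OF less.prems(1)] compact_sphere by (rule closed_Int_compact)
    have "(1 / norm x) *\<^sub>R x \<in> K" using xS x0 less.prems(1) by (simp add: K_def subspace_scale)
    then have neK: "K \<noteq> {}" by blast
    have ctK: "continuous_on K (\<lambda>y. y \<bullet> (A *v y))"
      by (intro continuous_intros)
    obtain v where vK: "v \<in> K" and vmin: "\<forall>y\<in>K. v \<bullet> (A *v v) \<le> y \<bullet> (A *v y)"
      using continuous_attains_inf[OF cK neK ctK] by blast
    have vS: "v \<in> S" and nv: "norm v = 1" using vK by (auto simp: K_def)
    have ev: "A *v v = (v \<bullet> (A *v v)) *\<^sub>R v"
      by (rule min_eig[OF symA less.prems(1) less.prems(2) vS nv]) (use vmin in \<open>auto simp: K_def\<close>)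
    define l where "l = v \<bullet> (A *v v)"
    define S' where "S' = {y\<in>S. v \<bullet> y = 0}"
    have sS': "subspace S'" using less.prems(1)
      unfolding S'_def subspace_def by (auto simp: inner_add_right)
    have iS': "\<forall>y\<in>S'. A *v y \<in> S'"
    proof
      fix y assume y: "y \<in> S'"
      have "v \<bullet> (A *v y) = (A *v v) \<bullet> y" by (rule sym_inner[OF symA])
      also have "\<dots> = l * (v \<bullet> y)" using ev by (simp add: l_def[symmetric])
      finally show "A *v y \<in> S'" using y less.prems(2) by (auto simp: S'_def)
    qed
    have vv: "v \<bullet> v = 1" using nv by (simp add: dot_square_norm)
    have e1: "span S' = S'" using sS' by simp
    have e2: "span S = S" using less.prems(1) by simp
    have "v \<notin> S'" using vv by (simp add: S'_def)
    moreover have "S' \<subseteq> S" by (auto simp: S'_def)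
    ultimately have "S' \<subset> S" using vS by blast
    then have "span S' \<subset> span S" unfolding e1 e2 .
    then have "dim S' < dim S" by (rule dim_psubset)
    from less.hyps[OF this sS' iS'] obtain B' where B': "finite B'" "B' \<subseteq> S'" "span B' = S'"
      "pairwise orthogonal B'" "\<forall>b\<in>B'. norm b = 1 \<and> A *v b = (b \<bullet> (A *v b)) *\<^sub>R b" by blast
    define B where "B = insert v B'"
    have "finite B" using B' by (simp add: B_def)
    moreover have BS: "B \<subseteq> S" using B' vS by (auto simp: B_def S'_def)
    moreover have "span B = S"
    proof
      show "span B \<subseteq> S" using BS less.prems(1) by (simp add: span_minimal)
      show "S \<subseteq> span B"
      proof
        fix y assume y: "y \<in> S"
        have "y - (v \<bullet> y) *\<^sub>R v \<in> S'"
          using y vS less.prems(1) vv by (simp add: S'_def subspace_diff subspace_scale inner_diff_right)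
        then have "y - (v \<bullet> y) *\<^sub>R v \<in> span B'" using B' by simp
        then show "y \<in> span B" unfolding B_def span_breakdown_eq by auto
      qed
    qed
    moreover have "pairwise orthogonal B"
      using B' unfolding B_def pairwise_insert
      by (auto simp: S'_def orthogonal_def inner_commute)
    moreover have "\<forall>b\<in>B. norm b = 1 \<and> A *v b = (b \<bullet> (A *v b)) *\<^sub>R b"
      using B' nv ev by (auto simp: B_def)
    ultimately show ?thesis by blast
  qed
qed

lemma spectral:
  fixes A :: "real^'n^'n"
  assumes symA: "transpose A = A"
  shows "\<exists>u::'n \<Rightarrow> real^'n. (\<forall>i j. u i \<bullet> u j = (if i = j then 1 else 0)) \<and>
           (\<forall>i. A *v u i = (u i \<bullet> (A *v u i)) *\<^sub>R u i)"
proof -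
  obtain B where B: "finite B" "span B = UNIV" "pairwise orthogonal B"
      "\<forall>b\<in>B. norm b = 1 \<and> A *v b = (b \<bullet> (A *v b)) *\<^sub>R b"
    using spectral_subspace[OF symA, of UNIV] subspace_UNIV by auto
  have "0 \<notin> B" using B(4) by auto
  then have "independent B" using B(3) pairwise_orthogonal_independent by blast
  then have "card B = dim B" by (simp add: dim_eq_card_independent)
  also have "\<dots> = dim (UNIV :: (real^'n) set)" using B(2) by (metis dim_span)
  also have "\<dots> = CARD('n)" by simp
  finally have cB: "card B = card (UNIV :: 'n set)" .
  have "\<exists>h. bij_betw h (UNIV :: 'n set) B"
    using finite_same_card_bij[OF _ B(1) cB[symmetric]] by simp
  then obtain h where h: "bij_betw h (UNIV :: 'n set) B" by blast
  have hB: "h i \<in> B" for i using h by (auto simp: bij_betw_def)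
  have hinj: "h i = h j \<Longrightarrow> i = j" for i j using h by (auto simp: bij_betw_def inj_on_def)
  show ?thesis
  proof (intro exI[of _ h] conjI allI)
    fix i j
    show "h i \<bullet> h j = (if i = j then 1 else 0)"
    proof (cases "i = j")
      case True
      then show ?thesis using B(4) hB[of i] by (simp add: dot_square_norm)
    next
      case False
      then have "h i \<noteq> h j" using hinj by blast
      then show ?thesis using B(3) hB[of i] hB[of j] False by (auto simp: pairwise_def orthogonal_def)
    qed
  next
    fix i show "A *v h i = (h i \<bullet> (A *v h i)) *\<^sub>R h i" using B(4) hB[of i] by blast
  qed
qed

lemma mset_prod_unique:
  fixes M M' :: "real multiset"
  assumes "\<forall>t. (\<Prod>l\<in>#M. t - l) = (\<Prod>l\<in>#M'. t - l)"
  shows "M = M'"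
proof -
  define p where "p = (\<lambda>N. \<Prod>l\<in>#N. [:- l, 1::real:])"
  have pp: "poly (p N) t = (\<Prod>l\<in>#N. t - l)" for N t
    by (simp add: p_def poly_prod_mset)
  have "poly (p M) = poly (p M')" using assms by (simp add: pp fun_eq_iff)
  then have eq: "p M = p M'" by (simp add: poly_eq_poly_eq_iff)
  show ?thesis using eq
  proof (induction M arbitrary: M')
    case empty
    show ?case
    proof (rule ccontr)
      assume "{#} \<noteq> M'"
      then obtain x where "x \<in># M'" by (metis multiset_nonemptyE)
      then have "poly (p M') x = 0" by (simp add: pp prod_mset_zero_iff)
      then show False using empty by (simp add: p_def)
    qed
  next
    case (add x M)
    have "poly (p (add_mset x M)) x = 0" by (simp add: pp)
    then have "poly (p M') x = 0" using add.prems by simp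
    then have "x \<in># M'" by (auto simp: pp prod_mset_zero_iff)
    then obtain M'' where M': "M' = add_mset x M''" by (metis multi_member_split)
    have e: "[:- x, 1:] * p M = [:- x, 1:] * p M''" using add.prems by (simp add: p_def M')
    have nz: "[:- x, 1::real:] \<noteq> 0" by simp
    have "p M = p M''" using mult_left_cancel[OF nz] e by blast
    then have "M = M''" by (rule add.IH)
    then show ?case by (simp add: M')
  qed
qed

lemma conj_entry:
  fixes u :: "'n::finite \<Rightarrow> real^'n" and M :: "real^'n^'n"
  shows "(transpose (\<chi> r c. u c $ r) ** M ** (\<chi> r c. u c $ r)) $ i $ j = u i \<bullet> (M *v u j)"
proof -
  have "(transpose (\<chi> r c. u c $ r) ** M ** (\<chi> r c. u c $ r)) $ i $ j
      = (\<Sum>l\<in>UNIV. (\<Sum>r\<in>UNIV. u i $ r * M $ r $ l) * u j $ l)"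
    by (simp add: matrix_matrix_mult_def transpose_def)
  also have "\<dots> = (\<Sum>r\<in>UNIV. u i $ r * (\<Sum>l\<in>UNIV. M $ r $ l * u j $ l))"
    by (simp add: sum_distrib_left sum_distrib_right mult.assoc) (rule sum.swap)
  also have "\<dots> = u i \<bullet> (M *v u j)"
    by (simp add: inner_vec_def matrix_vector_mult_def)
  finally show ?thesis .
qed

lemma mat_vec: "(mat t :: real^'n^'n) *v v = t *\<^sub>R v"
proof -
  have "(\<Sum>j\<in>UNIV. (mat t :: real^'n^'n) $ i $ j * v $ j) = t * v $ i" for i
  proof -
    have "(\<Sum>j\<in>UNIV. (mat t :: real^'n^'n) $ i $ j * v $ j) = (\<Sum>j\<in>UNIV. if i = j then t * v $ j else 0)"
      by (rule sum.cong) (auto simp: mat_def)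
    also have "\<dots> = t * v $ i" by (simp add: sum.delta)
    finally show ?thesis .
  qed
  then show ?thesis by (simp add: vec_eq_iff matrix_vector_mult_def)
qed

lemma det_eig:
  fixes A :: "real^'n^'n" and u :: "'n \<Rightarrow> real^'n"
  assumes orth: "\<forall>i j. u i \<bullet> u j = (if i = j then 1 else 0)"
    and ev: "\<forall>i. A *v u i = lam i *\<^sub>R u i"
  shows "det (mat t - A) = (\<Prod>i\<in>UNIV. t - lam i)"
proof -
  define P where "P = ((\<chi> r c. u c $ r) :: real^'n^'n)"
  have E: "(transpose P ** mat 1 ** P) $ i $ j = (mat 1 :: real^'n^'n) $ i $ j" for i j
  proof -
    have "(transpose P ** mat 1 ** P) $ i $ j = u i \<bullet> (mat 1 *v u j)" unfolding P_def by (rule conj_entry)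
    also have "\<dots> = (mat 1 :: real^'n^'n) $ i $ j" by (simp only: mat_vec) (simp add: orth mat_def)
    finally show ?thesis .
  qed
  have "transpose P ** mat 1 ** P = mat 1"
    by (simp only: vec_eq_iff E) simp
  then have "det (transpose P ** mat 1 ** P) = 1" by simp
  then have dP: "det P * det P = 1" by (simp add: det_mul)
  have D: "(transpose P ** (mat t - A) ** P) $ i $ j = (if i = j then t - lam i else 0)" for i j
    by (simp add: P_def conj_entry matrix_vector_mult_diff_rdistrib mat_vec ev inner_diff_right orth)
  have "det (transpose P ** (mat t - A) ** P) = (\<Prod>i\<in>UNIV. t - lam i)"
    by (subst det_diagonal) (simp_all add: D)
  then have "det P * det P * det (mat t - A) = (\<Prod>i\<in>UNIV. t - lam i)"
    by (simp add: det_mul algebra_simps)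
  then show ?thesis using dP by simp
qed

lemma eig_mset_eq:
  fixes A :: "real^'n^'n" and u :: "'n \<Rightarrow> real^'n"
  assumes orth: "\<forall>i j. u i \<bullet> u j = (if i = j then 1 else 0)"
    and ev: "\<forall>i. A *v u i = lam i *\<^sub>R u i"
  shows "eig_mset A = image_mset lam (mset_set UNIV)"
  unfolding eig_mset_def
proof (rule the_equality)
  show "size (image_mset lam (mset_set UNIV)) = CARD('n) \<and>
    (\<forall>t. det (mat t - A) = (\<Prod>l\<in>#image_mset lam (mset_set UNIV). t - l))"
    using det_eig[OF orth ev] by (simp add: prod_unfold_prod_mset image_mset.compositionality o_def)
next
  fix M assume M: "size M = CARD('n) \<and> (\<forall>t. det (mat t - A) = (\<Prod>l\<in>#M. t - l))"
  show "M = image_mset lam (mset_set UNIV)"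
    apply (rule mset_prod_unique)
    using M det_eig[OF orth ev] by (simp add: prod_unfold_prod_mset image_mset.compositionality o_def)
qed

lemma take_sorted_sum:
  fixes lam :: "'n::finite \<Rightarrow> real"
  assumes "k \<le> CARD('n)"
  shows "\<exists>S. card S = k \<and> sum_list (take k (sorted_list_of_multiset (image_mset lam (mset_set UNIV)))) = sum lam S"
proof -
  obtain xs where xs: "set xs = (UNIV :: 'n set)" "distinct xs" using finite_distinct_list[of "UNIV :: 'n set"] by auto
  define ys where "ys = sort_key lam xs"
  have dys: "distinct ys" using xs by (simp add: ys_def)
  have sys: "set ys = UNIV" using xs by (simp add: ys_def)
  have lys: "length ys = CARD('n)" using distinct_card[OF dys] sys by simp
  have "mset_set (UNIV::'n set) = mset xs" using mset_set_set[OF xs(2)] xs(1) by simp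
  then have e: "image_mset lam (mset_set UNIV) = mset (map lam ys)"
    by (simp add: ys_def)
  have "sorted_list_of_multiset (mset (map lam ys)) = map lam ys"
    by (simp only: sorted_list_of_multiset_mset) (simp add: ys_def sorted_sort_id)
  then have "sorted_list_of_multiset (image_mset lam (mset_set UNIV)) = map lam ys"
    by (simp only: e)
  then have "sum_list (take k (sorted_list_of_multiset (image_mset lam (mset_set UNIV)))) = sum_list (map lam (take k ys))"
    by (simp add: take_map)
  also have "\<dots> = sum lam (set (take k ys))"
    using dys by (simp add: sum_list_distinct_conv_sum_set)
  finally show ?thesis using dys lys assms
    by (intro exI[of _ "set (take k ys)"]) (simp add: distinct_card)
qed

lemma bl_mv: "bounded_linear (\<lambda>M::real^'n^'m. M *v b)"
proof -
  have "linear (\<lambda>M::real^'n^'m. M *v b)"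
    by (rule linearI) (simp_all add: matrix_vector_mult_add_rdistrib scaleR_matrix_vector_assoc)
  then show ?thesis by (simp add: linear_conv_bounded_linear)
qed

lemma continuous_on_mv [continuous_intros]:
  fixes H :: "'a::topological_space \<Rightarrow> real^'n^'m"
  assumes "continuous_on X H"
  shows "continuous_on X (\<lambda>y. H y *v b)"
  using bounded_linear.continuous_on[OF bl_mv assms] .

lemma deriv_line:
  fixes f :: "real^'n \<Rightarrow> real"
  assumes "(f has_derivative (\<lambda>v. G \<bullet> v)) (at (p + s *\<^sub>R a))"
  shows "((\<lambda>\<sigma>. f (p + \<sigma> *\<^sub>R a)) has_real_derivative (G \<bullet> a)) (at s)"
proof -
  have l: "((\<lambda>\<sigma>. p + \<sigma> *\<^sub>R a) has_derivative (\<lambda>\<sigma>. \<sigma> *\<^sub>R a)) (at s)"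
    by (intro derivative_eq_intros) auto
  have "((\<lambda>\<sigma>. f (p + \<sigma> *\<^sub>R a)) has_derivative (\<lambda>\<sigma>. G \<bullet> (\<sigma> *\<^sub>R a))) (at s)"
    using has_derivative_compose[OF l assms] by simp
  moreover have "(\<lambda>\<sigma>. G \<bullet> (\<sigma> *\<^sub>R a)) = (*) (G \<bullet> a)" by (auto simp: fun_eq_iff mult.commute)
  ultimately show ?thesis unfolding has_field_derivative_def by simp
qed

lemma deriv_line_vec:
  fixes g :: "real^'n \<Rightarrow> real^'n"
  assumes "(g has_derivative (\<lambda>v. M *v v)) (at (p + s *\<^sub>R b))"
  shows "((\<lambda>\<tau>. g (p + \<tau> *\<^sub>R b) \<bullet> a) has_real_derivative ((M *v b) \<bullet> a)) (at s)"
proof -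
  have l: "((\<lambda>\<sigma>. p + \<sigma> *\<^sub>R b) has_derivative (\<lambda>\<sigma>. \<sigma> *\<^sub>R b)) (at s)"
    by (intro derivative_eq_intros) auto
  have "((\<lambda>\<sigma>. g (p + \<sigma> *\<^sub>R b)) has_derivative (\<lambda>\<sigma>. M *v (\<sigma> *\<^sub>R b))) (at s)"
    using has_derivative_compose[OF l assms] by simp
  then have "((\<lambda>\<sigma>. g (p + \<sigma> *\<^sub>R b) \<bullet> a) has_derivative (\<lambda>\<sigma>. (M *v (\<sigma> *\<^sub>R b)) \<bullet> a)) (at s)"
    by (intro derivative_eq_intros) auto
  moreover have "(\<lambda>\<sigma>. (M *v (\<sigma> *\<^sub>R b)) \<bullet> a) = (*) ((M *v b) \<bullet> a)"
    by (auto simp: fun_eq_iff mult.commute matrix_vector_mult_scaleR)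
  ultimately show ?thesis unfolding has_field_derivative_def by simp
qed

lemma abs_contra:
  fixes A B C D :: real
  assumes "\<bar>A - C\<bar> < \<bar>C - D\<bar> / 2" "\<bar>B - D\<bar> < \<bar>C - D\<bar> / 2" "A = B"
  shows False
  using assms by (auto simp: abs_if split: if_splits)

lemma schwarz_D:
  fixes \<phi> :: "real^'n \<Rightarrow> real"
  assumes ball: "ball x r \<subseteq> X"
   and d1: "\<forall>y\<in>X. (\<phi> has_derivative (\<lambda>v. g y \<bullet> v)) (at y)"
   and d2: "\<forall>y\<in>X. (g has_derivative (\<lambda>v. H y *v v)) (at y)"
   and t: "0 < t" "t * (norm a + norm b) < r"
  shows "\<exists>y. norm (y - x) \<le> t * (norm a + norm b) \<and>
    \<phi> (x + t *\<^sub>R a + t *\<^sub>R b) - \<phi> (x + t *\<^sub>R a) - \<phi> (x + t *\<^sub>R b) + \<phi> x = t * t * ((H y *v b) \<bullet> a)"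
proof -
  have nb: "norm (\<sigma> *\<^sub>R a + \<tau> *\<^sub>R b) \<le> t * (norm a + norm b)"
    if "0 \<le> \<sigma>" "\<sigma> \<le> t" "0 \<le> \<tau>" "\<tau> \<le> t" for \<sigma> \<tau>
  proof -
    have "norm (\<sigma> *\<^sub>R a + \<tau> *\<^sub>R b) \<le> \<sigma> * norm a + \<tau> * norm b"
      using norm_triangle_ineq[of "\<sigma> *\<^sub>R a" "\<tau> *\<^sub>R b"] that by simp
    also have "\<dots> \<le> t * norm a + t * norm b"
      using that by (intro add_mono mult_right_mono) auto
    finally show ?thesis by (simp add: distrib_left)
  qed
  have inX: "x + \<sigma> *\<^sub>R a + \<tau> *\<^sub>R b \<in> X"
    if "0 \<le> \<sigma>" "\<sigma> \<le> t" "0 \<le> \<tau>" "\<tau> \<le> t" for \<sigma> \<tau>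
  proof -
    have "x - (x + \<sigma> *\<^sub>R a + \<tau> *\<^sub>R b) = - (\<sigma> *\<^sub>R a + \<tau> *\<^sub>R b)" by simp
    then have "dist x (x + \<sigma> *\<^sub>R a + \<tau> *\<^sub>R b) = norm (\<sigma> *\<^sub>R a + \<tau> *\<^sub>R b)"
      by (simp only: dist_norm norm_minus_cancel)
    also have "\<dots> < r" using nb[OF that] t by linarith
    finally show ?thesis using ball by auto
  qed
  define p where "p = (\<lambda>\<sigma>. \<phi> ((x + t *\<^sub>R b) + \<sigma> *\<^sub>R a) - \<phi> (x + \<sigma> *\<^sub>R a))"
  have dp: "DERIV p \<sigma> :> (g ((x + t *\<^sub>R b) + \<sigma> *\<^sub>R a) \<bullet> a - g (x + \<sigma> *\<^sub>R a) \<bullet> a)"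
    if "0 \<le> \<sigma>" "\<sigma> \<le> t" for \<sigma>
  proof -
    have m1: "(x + t *\<^sub>R b) + \<sigma> *\<^sub>R a \<in> X" using inX[of \<sigma> t] that t by (simp add: add_ac)
    have m2: "x + \<sigma> *\<^sub>R a \<in> X" using inX[of \<sigma> 0] that t by simp
    show ?thesis unfolding p_def
      by (intro DERIV_diff deriv_line) (use d1 m1 m2 in auto)
  qed
  obtain \<xi> where \<xi>: "0 < \<xi>" "\<xi> < t" "p t - p 0 = (t - 0) * (g ((x + t *\<^sub>R b) + \<xi> *\<^sub>R a) \<bullet> a - g (x + \<xi> *\<^sub>R a) \<bullet> a)"
    using MVT2[OF t(1) dp] by auto
  define q where "q = (\<lambda>\<tau>. g ((x + \<xi> *\<^sub>R a) + \<tau> *\<^sub>R b) \<bullet> a)"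
  have dq: "DERIV q \<tau> :> ((H ((x + \<xi> *\<^sub>R a) + \<tau> *\<^sub>R b) *v b) \<bullet> a)"
    if "0 \<le> \<tau>" "\<tau> \<le> t" for \<tau>
  proof -
    have m: "(x + \<xi> *\<^sub>R a) + \<tau> *\<^sub>R b \<in> X" using inX[of \<xi> \<tau>] that \<xi> by simp
    show ?thesis unfolding q_def by (rule deriv_line_vec) (use d2 m in auto)
  qed
  obtain \<eta> where \<eta>: "0 < \<eta>" "\<eta> < t" "q t - q 0 = (t - 0) * ((H ((x + \<xi> *\<^sub>R a) + \<eta> *\<^sub>R b) *v b) \<bullet> a)"
    using MVT2[OF t(1) dq] by auto
  define y where "y = (x + \<xi> *\<^sub>R a) + \<eta> *\<^sub>R b"
  have "q t - q 0 = g ((x + t *\<^sub>R b) + \<xi> *\<^sub>R a) \<bullet> a - g (x + \<xi> *\<^sub>R a) \<bullet> a"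
    by (simp add: q_def add_ac)
  then have "p t - p 0 = t * (t * ((H y *v b) \<bullet> a))" using \<xi>(3) \<eta>(3) by (simp add: y_def)
  moreover have "p t - p 0 = \<phi> (x + t *\<^sub>R a + t *\<^sub>R b) - \<phi> (x + t *\<^sub>R a) - \<phi> (x + t *\<^sub>R b) + \<phi> x"
    by (simp add: p_def add_ac)
  moreover have "norm (y - x) \<le> t * (norm a + norm b)"
    using nb[of \<xi> \<eta>] \<xi> \<eta> by (simp add: y_def)
  ultimately show ?thesis by (intro exI[of _ y]) simp
qed

lemma hess_symmetric:
  fixes \<phi> :: "real^'n \<Rightarrow> real"
  assumes X: "open X" "x \<in> X"
   and d1: "\<forall>y\<in>X. (\<phi> has_derivative (\<lambda>v. g y \<bullet> v)) (at y)"
   and d2: "\<forall>y\<in>X. (g has_derivative (\<lambda>v. H y *v v)) (at y)"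
   and cH: "continuous_on X H"
  shows "(H x *v b) \<bullet> a = (H x *v a) \<bullet> b"
proof (rule ccontr)
  assume ne: "(H x *v b) \<bullet> a \<noteq> (H x *v a) \<bullet> b"
  define e where "e = \<bar>(H x *v b) \<bullet> a - (H x *v a) \<bullet> b\<bar>"
  have e: "e > 0" using ne by (simp add: e_def)
  have c1: "isCont (\<lambda>y. (H y *v b) \<bullet> a) x"
    using continuous_on_eq_continuous_at[OF X(1)] X(2) cH by (auto intro!: continuous_intros)
  have c2: "isCont (\<lambda>y. (H y *v a) \<bullet> b) x"
    using continuous_on_eq_continuous_at[OF X(1)] X(2) cH by (auto intro!: continuous_intros)
  obtain d1' where d1': "d1' > 0" "\<forall>y. dist y x < d1' \<longrightarrow> dist ((H y *v b) \<bullet> a) ((H x *v b) \<bullet> a) < e / 2"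
    using c1 e unfolding continuous_at_eps_delta by (meson half_gt_zero)
  obtain d2' where d2': "d2' > 0" "\<forall>y. dist y x < d2' \<longrightarrow> dist ((H y *v a) \<bullet> b) ((H x *v a) \<bullet> b) < e / 2"
    using c2 e unfolding continuous_at_eps_delta by (meson half_gt_zero)
  obtain r where r: "r > 0" "ball x r \<subseteq> X" using X open_contains_ball by blast
  define m where "m = min r (min d1' d2')"
  have m: "m > 0" using r d1' d2' by (simp add: m_def)
  define N where "N = norm a + norm b + 1"
  have N: "N > 0" by (simp add: N_def add_nonneg_pos)
  define t where "t = m / (2 * N)"
  have t: "t > 0" using m N by (simp add: t_def)
  have tN: "t * (norm a + norm b) < m"
  proof -
    have "t * (norm a + norm b) \<le> t * N" using t by (intro mult_left_mono) (auto simp: N_def)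
    also have "t * N = m / 2" using N by (simp add: t_def)
    finally show ?thesis using m by linarith
  qed
  have tr: "t * (norm a + norm b) < r" using tN by (simp add: m_def)
  obtain y where y: "norm (y - x) \<le> t * (norm a + norm b)"
    "\<phi> (x + t *\<^sub>R a + t *\<^sub>R b) - \<phi> (x + t *\<^sub>R a) - \<phi> (x + t *\<^sub>R b) + \<phi> x = t * t * ((H y *v b) \<bullet> a)"
    using schwarz_D[OF r(2) d1 d2 t tr] by blast
  obtain y' where y': "norm (y' - x) \<le> t * (norm b + norm a)"
    "\<phi> (x + t *\<^sub>R b + t *\<^sub>R a) - \<phi> (x + t *\<^sub>R b) - \<phi> (x + t *\<^sub>R a) + \<phi> x = t * t * ((H y' *v a) \<bullet> b)"
    using schwarz_D[OF r(2) d1 d2 t, of b a] tr by (auto simp: add.commute)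
  have sw: "x + t *\<^sub>R b + t *\<^sub>R a = x + t *\<^sub>R a + t *\<^sub>R b" by (simp add: add_ac)
  have "t * t * ((H y *v b) \<bullet> a) = t * t * ((H y' *v a) \<bullet> b)"
    using y(2) y'(2) unfolding sw by linarith
  then have eq: "(H y *v b) \<bullet> a = (H y' *v a) \<bullet> b" using t by simp
  have "dist y x < d1'" using y(1) tN by (simp add: dist_norm m_def)
  then have "\<bar>(H y *v b) \<bullet> a - (H x *v b) \<bullet> a\<bar> < e / 2" using d1'(2) by (simp add: dist_real_def)
  moreover have "dist y' x < d2'" using y'(1) tN by (simp add: dist_norm m_def add.commute)
  then have "\<bar>(H y' *v a) \<bullet> b - (H x *v a) \<bullet> b\<bar> < e / 2" using d2'(2) by (simp add: dist_real_def)
  ultimately show False using eq unfolding e_def by (rule abs_contra)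
qed

lemma hess_transpose:
  fixes \<phi> :: "real^'n \<Rightarrow> real"
  assumes X: "open X" "x \<in> X"
   and d1: "\<forall>y\<in>X. (\<phi> has_derivative (\<lambda>v. g y \<bullet> v)) (at y)"
   and d2: "\<forall>y\<in>X. (g has_derivative (\<lambda>v. H y *v v)) (at y)"
   and cH: "continuous_on X H"
  shows "transpose (H x) = H x"
proof -
  have "(H x *v axis j 1) \<bullet> axis i 1 = (H x *v axis i 1) \<bullet> axis j 1" for i j
    by (rule hess_symmetric[OF X d1 d2 cH])
  then have "H x $ i $ j = H x $ j $ i" for i j
    by (simp add: matrix_vector_mult_basis inner_axis column_def)
  then show ?thesis by (simp add: vec_eq_iff transpose_def)
qed

lemma first_order:
  fixes \<psi> :: "real^'n \<Rightarrow> real"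
  assumes X: "open X" "x \<in> X"
   and d1: "(\<psi> has_derivative (\<lambda>v. G \<bullet> v)) (at x)"
   and mn: "\<forall>y\<in>X. \<psi> x \<le> \<psi> y"
  shows "G = 0"
proof -
  have "eventually (\<lambda>y. \<psi> x \<le> \<psi> y) (at x)"
    using X mn unfolding eventually_at_topological by blast
  from has_derivative_local_min[OF d1 this] have "(\<lambda>v. G \<bullet> v) = (\<lambda>v. 0)" .
  then have "G \<bullet> G = 0" by metis
  then show ?thesis by simp
qed

lemma second_order:
  fixes \<psi> :: "real^'n \<Rightarrow> real"
  assumes X: "open X" "x \<in> X"
   and d1: "\<forall>y\<in>X. (\<psi> has_derivative (\<lambda>v. G y \<bullet> v)) (at y)"
   and d2: "\<forall>y\<in>X. (G has_derivative (\<lambda>v. Hs y *v v)) (at y)"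
   and cH: "continuous_on X Hs"
   and mn: "\<forall>y\<in>X. \<psi> x \<le> \<psi> y"
  shows "(Hs x *v u) \<bullet> u \<ge> 0"
proof (rule ccontr)
  assume "\<not> (Hs x *v u) \<bullet> u \<ge> 0"
  then have neg: "(Hs x *v u) \<bullet> u < 0" by simp
  have G0: "G x = 0" using first_order[OF X _ mn] d1 X by blast
  have c1: "isCont (\<lambda>y. (Hs y *v u) \<bullet> u) x"
    using continuous_on_eq_continuous_at[OF X(1)] X(2) cH by (auto intro!: continuous_intros)
  obtain d where d: "d > 0" "\<forall>y. dist y x < d \<longrightarrow> dist ((Hs y *v u) \<bullet> u) ((Hs x *v u) \<bullet> u) < - ((Hs x *v u) \<bullet> u)"
    using c1 neg unfolding continuous_at_eps_delta by (meson neg_0_less_iff_less)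
  have dneg: "(Hs y *v u) \<bullet> u < 0" if "dist y x < d" for y
    using d(2) that by (auto simp: dist_real_def)
  obtain r where r: "r > 0" "ball x r \<subseteq> X" using X open_contains_ball by blast
  define m where "m = min r d"
  have m: "m > 0" using r d by (simp add: m_def)
  define t where "t = m / (2 * (norm u + 1))"
  have t: "t > 0" using m by (simp add: t_def add_nonneg_pos)
  have near: "dist (x + s *\<^sub>R u) x < m" if "0 \<le> s" "s \<le> t" for s
  proof -
    have "dist (x + s *\<^sub>R u) x = s * norm u" using that by (simp add: dist_norm)
    also have "\<dots> \<le> t * (norm u + 1)" using that by (intro mult_mono) auto
    also have "\<dots> = m / 2"
    proof -
      have "norm u + 1 > 0" by (simp add: add_nonneg_pos)
      then show ?thesis by (simp add: t_def field_simps)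
    qed
    finally show ?thesis using m by linarith
  qed
  have inX: "x + s *\<^sub>R u \<in> X" if "0 \<le> s" "s \<le> t" for s
    using near[OF that] r(2) by (auto simp: m_def dist_commute)
  have neg2: "(Hs (x + s *\<^sub>R u) *v u) \<bullet> u < 0" if "0 \<le> s" "s \<le> t" for s
    using near[OF that] dneg by (simp add: m_def)
  define f1 where "f1 = (\<lambda>s. G (x + s *\<^sub>R u) \<bullet> u)"
  have df1: "DERIV f1 s :> (Hs (x + s *\<^sub>R u) *v u) \<bullet> u" if "0 \<le> s" "s \<le> t" for s
    unfolding f1_def by (rule deriv_line_vec) (use d2 inX[OF that] in auto)
  have f1neg: "f1 s < 0" if "0 < s" "s \<le> t" for s
  proof -
    have "\<And>z. 0 \<le> z \<Longrightarrow> z \<le> s \<Longrightarrow> DERIV f1 z :> (Hs (x + z *\<^sub>R u) *v u) \<bullet> u"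
      using df1 that by auto
    from MVT2[OF that(1) this] obtain z where z: "0 < z" "z < s"
      "f1 s - f1 0 = (s - 0) * ((Hs (x + z *\<^sub>R u) *v u) \<bullet> u)" by blast
    have "(Hs (x + z *\<^sub>R u) *v u) \<bullet> u < 0" using neg2[of z] z that by auto
    then have "s * ((Hs (x + z *\<^sub>R u) *v u) \<bullet> u) < 0" using that by (simp add: mult_pos_neg)
    moreover have "f1 0 = 0" by (simp add: f1_def G0)
    ultimately show ?thesis using z(3) by simp
  qed
  define f where "f = (\<lambda>s. \<psi> (x + s *\<^sub>R u))"
  have df: "DERIV f s :> f1 s" if "0 \<le> s" "s \<le> t" for s
    unfolding f_def f1_def by (rule deriv_line) (use d1 inX[OF that] in auto)
  from MVT2[OF t df] obtain z where z: "0 < z" "z < t" "f t - f 0 = (t - 0) * f1 z" by blast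
  have "f1 z < 0" using f1neg z by auto
  then have "t * f1 z < 0" using t by (simp add: mult_pos_neg)
  then have "f t < f 0" using z(3) by simp
  moreover have "f 0 \<le> f t" using mn inX[of t] t by (simp add: f_def)
  ultimately show False by simp
qed

lemma Pk_frame:
  fixes A :: "real^'n^'n"
  assumes symA: "transpose A = A" and kn: "k \<le> CARD('n)"
  shows "\<exists>(u::'n \<Rightarrow> real^'n) S. (\<forall>i j. u i \<bullet> u j = (if i = j then 1 else 0)) \<and> card S = k \<and>
           Pkminus k A = (\<Sum>i\<in>S. u i \<bullet> (A *v u i))"
proof -
  obtain u :: "'n \<Rightarrow> real^'n" where orth: "\<forall>i j. u i \<bullet> u j = (if i = j then 1 else 0)"
    and ev: "\<forall>i. A *v u i = (u i \<bullet> (A *v u i)) *\<^sub>R u i"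
    using spectral[OF symA] by blast
  define lam where "lam = (\<lambda>i. u i \<bullet> (A *v u i))"
  have ev': "\<forall>i. A *v u i = lam i *\<^sub>R u i" using ev by (simp add: lam_def)
  have E: "eig_mset A = image_mset lam (mset_set UNIV)" by (rule eig_mset_eq[OF orth ev'])
  obtain S where S: "card S = k" "sum_list (take k (sorted_list_of_multiset (image_mset lam (mset_set UNIV)))) = sum lam S"
    using take_sorted_sum[OF kn] by blast
  have "Pkminus k A = sum lam S" using S(2) by (simp add: Pkminus_def E)
  then show ?thesis using orth S(1) by (intro exI[of _ u] exI[of _ S]) (simp add: lam_def)
qed

definition onf :: "('n \<Rightarrow> real^'n) \<Rightarrow> 'n set \<Rightarrow> bool" where
  "onf u S \<longleftrightarrow> (\<forall>i\<in>S. \<forall>j\<in>S. u i \<bullet> u j = (if i = j then 1 else 0))"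

lemma Fk_ge:
  fixes H :: "real^'n^'n"
  assumes symH: "transpose H = H" and kn: "k \<le> CARD('n)"
    and fb: "\<forall>u S. onf u S \<and> card S = k \<longrightarrow> L \<le> (\<Sum>i\<in>S. u i \<bullet> (H *v u i)) - h * norm p"
  shows "L \<le> Fk k h H p"
proof -
  obtain u :: "'n \<Rightarrow> real^'n" and S :: "'n set" where u: "\<forall>i j. u i \<bullet> u j = (if i = j then 1 else 0)" "card S = k"
      "Pkminus k H = (\<Sum>i\<in>S. u i \<bullet> (H *v u i))"
    using Pk_frame[OF symH kn] by blast
  have "onf u S" using u(1) by (simp add: onf_def)
  then show ?thesis using fb u by (simp add: Fk_def)
qed

lemma C2_on_subset: "C2_on V w g H \<Longrightarrow> X \<subseteq> V \<Longrightarrow> C2_on X w g H"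
  unfolding C2_on_def by (auto intro: continuous_on_subset)

lemma visc_lemma:
  fixes w :: "real^'n \<Rightarrow> real"
  assumes V: "open V" and C2: "C2_on V w g H" and kn: "k \<le> CARD('n)"
    and fb: "\<forall>x\<in>V. \<forall>u S. onf u S \<and> card S = k \<longrightarrow> 0 \<le> (\<Sum>i\<in>S. u i \<bullet> (H x *v u i)) - h * norm (g x) + c * w x"
  shows "visc_sub k h c V w"
  unfolding visc_sub_def
proof (intro ballI allI impI)
  fix x \<phi> g\<phi> H\<phi> r
  assume x: "x \<in> V" and A: "0 < r \<and> ball x r \<subseteq> V \<and> C2_on (ball x r) \<phi> g\<phi> H\<phi> \<and> (\<forall>y\<in>ball x r. w y \<le> \<phi> y) \<and> \<phi> x = w x"
  define B where "B = ball x r"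
  have oB: "open B" and xB: "x \<in> B" using A by (auto simp: B_def)
  have C2w: "C2_on B w g H" using C2_on_subset[OF C2] A by (simp add: B_def)
  have C2p: "C2_on B \<phi> g\<phi> H\<phi>" using A by (simp add: B_def)
  have d1: "\<forall>y\<in>B. ((\<lambda>y. \<phi> y - w y) has_derivative (\<lambda>v. (g\<phi> y - g y) \<bullet> v)) (at y)"
  proof
    fix y assume "y \<in> B"
    then have "((\<lambda>y. \<phi> y - w y) has_derivative (\<lambda>v. g\<phi> y \<bullet> v - g y \<bullet> v)) (at y)"
      using C2w C2p unfolding C2_on_def by (intro has_derivative_diff) auto
    then show "((\<lambda>y. \<phi> y - w y) has_derivative (\<lambda>v. (g\<phi> y - g y) \<bullet> v)) (at y)"
      by (simp add: inner_diff_left)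
  qed
  have d2: "\<forall>y\<in>B. ((\<lambda>y. g\<phi> y - g y) has_derivative (\<lambda>v. (H\<phi> y - H y) *v v)) (at y)"
  proof
    fix y assume "y \<in> B"
    then have "((\<lambda>y. g\<phi> y - g y) has_derivative (\<lambda>v. H\<phi> y *v v - H y *v v)) (at y)"
      using C2w C2p unfolding C2_on_def by (intro has_derivative_diff) auto
    then show "((\<lambda>y. g\<phi> y - g y) has_derivative (\<lambda>v. (H\<phi> y - H y) *v v)) (at y)"
      by (simp add: matrix_vector_mult_diff_rdistrib)
  qed
  have cH: "continuous_on B (\<lambda>y. H\<phi> y - H y)"
    using C2w C2p unfolding C2_on_def by (intro continuous_on_diff) auto
  have mn: "\<forall>y\<in>B. \<phi> x - w x \<le> \<phi> y - w y" using A by (auto simp: B_def)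
  have gx: "g\<phi> x - g x = 0"
    using first_order[OF oB xB _ mn] d1 xB by blast
  have quad: "(H x *v v) \<bullet> v \<le> (H\<phi> x *v v) \<bullet> v" for v
    using second_order[OF oB xB d1 d2 cH mn, of v] by (simp add: matrix_vector_mult_diff_rdistrib inner_diff_left)
  have sym: "transpose (H\<phi> x) = H\<phi> x"
    using hess_transpose[OF oB xB] C2p unfolding C2_on_def by blast
  show "0 \<le> Fk k h (H\<phi> x) (g\<phi> x) + c * w x"
  proof -
    have "- (c * w x) \<le> Fk k h (H\<phi> x) (g\<phi> x)"
    proof (rule Fk_ge[OF sym kn], intro allI impI)
      fix u :: "'n \<Rightarrow> real^'n" and S :: "'n set" assume uS: "onf u S \<and> card S = k"
      have "0 \<le> (\<Sum>i\<in>S. u i \<bullet> (H x *v u i)) - h * norm (g x) + c * w x" using fb x uS by blast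
      moreover have "(\<Sum>i\<in>S. u i \<bullet> (H x *v u i)) \<le> (\<Sum>i\<in>S. u i \<bullet> (H\<phi> x *v u i))"
        by (intro sum_mono) (simp add: quad inner_commute[of "u _"])
      moreover have "g\<phi> x = g x" using gx by simp
      ultimately show "- (c * w x) \<le> (\<Sum>i\<in>S. u i \<bullet> (H\<phi> x *v u i)) - h * norm (g\<phi> x)"
        by (simp only:)
    qed
    then show ?thesis by linarith
  qed
qed

definition tau :: "real \<Rightarrow> real^'n \<Rightarrow> real^'n \<Rightarrow> real" where
  "tau \<rho> c x = sqrt (\<rho>^2 + (x - c) \<bullet> (x - c))"

definition phib :: "nat \<Rightarrow> real \<Rightarrow> real \<Rightarrow> real \<Rightarrow> real" where
  "phib k h \<rho> t = \<rho>^k * exp (h * t - real k * ln t)"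

definition Wb :: "nat \<Rightarrow> real \<Rightarrow> real \<Rightarrow> real \<Rightarrow> real" where
  "Wb k h \<rho> t = integral {\<rho>/2..t} (\<lambda>s. s * phib k h \<rho> s)"

definition outer :: "real^'n \<Rightarrow> real^'n^'n" where
  "outer z = (\<chi> i j. z $ i * z $ j)"

definition bump :: "nat \<Rightarrow> real \<Rightarrow> real \<Rightarrow> real^'n \<Rightarrow> real^'n \<Rightarrow> real" where
  "bump k h \<rho> c x = Wb k h \<rho> (tau \<rho> c x)"

definition gradb :: "nat \<Rightarrow> real \<Rightarrow> real \<Rightarrow> real^'n \<Rightarrow> real^'n \<Rightarrow> real^'n" where
  "gradb k h \<rho> c x = phib k h \<rho> (tau \<rho> c x) *\<^sub>R (x - c)"

definition hessb :: "nat \<Rightarrow> real \<Rightarrow> real \<Rightarrow> real^'n \<Rightarrow> real^'n \<Rightarrow> real^'n^'n" where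
  "hessb k h \<rho> c x = phib k h \<rho> (tau \<rho> c x) *\<^sub>R mat 1 +
     (phib k h \<rho> (tau \<rho> c x) * (h - real k / tau \<rho> c x) / tau \<rho> c x) *\<^sub>R outer (x - c)"

lemma outer_mv: "outer z *v v = (z \<bullet> v) *\<^sub>R z"
  by (simp add: vec_eq_iff outer_def matrix_vector_mult_def inner_vec_def sum_distrib_left mult_ac)

lemma tau_sq: "(tau \<rho> c x)^2 = \<rho>^2 + (x - c) \<bullet> (x - c)"
  unfolding tau_def by (simp add: add_nonneg_nonneg)

lemma tau_pos: "\<rho> > 0 \<Longrightarrow> tau \<rho> c x > 0"
  unfolding tau_def by (simp add: add_pos_nonneg)

lemma tau_ge: "\<rho> > 0 \<Longrightarrow> \<rho> \<le> tau \<rho> c x"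
  unfolding tau_def by (rule real_le_rsqrt) simp

lemma tau_deriv:
  assumes "\<rho> > 0"
  shows "(tau \<rho> c has_derivative (\<lambda>v. ((x - c) \<bullet> v) / tau \<rho> c x)) (at x)"
proof -
  have pos: "\<rho>^2 + (x - c) \<bullet> (x - c) > 0" using assms by (simp add: add_pos_nonneg)
  have "((\<lambda>x. sqrt (\<rho>^2 + (x - c) \<bullet> (x - c))) has_derivative
     (\<lambda>v. inverse (sqrt (\<rho>^2 + (x - c) \<bullet> (x - c))) / 2 * ((x - c) \<bullet> v + v \<bullet> (x - c)))) (at x)"
    using pos by (auto intro!: derivative_eq_intros)
  moreover have "(\<lambda>v. inverse (sqrt (\<rho>^2 + (x - c) \<bullet> (x - c))) / 2 * ((x - c) \<bullet> v + v \<bullet> (x - c)))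
      = (\<lambda>v. ((x - c) \<bullet> v) / tau \<rho> c x)"
    by (auto simp: fun_eq_iff tau_def inner_commute field_simps)
  ultimately show ?thesis unfolding tau_def[abs_def] by simp
qed

lemma phib_deriv:
  assumes "t > 0"
  shows "DERIV (phib k h \<rho>) t :> phib k h \<rho> t * (h - real k / t)"
proof -
  have "DERIV (\<lambda>t. \<rho>^k * exp (h * t - real k * ln t)) t :> \<rho>^k * (exp (h * t - real k * ln t) * (h - real k * (1 / t)))"
    using assms by (auto intro!: derivative_eq_intros)
  then show ?thesis unfolding phib_def[abs_def] by (simp add: mult_ac)
qed

lemma phib_pos: "\<rho> > 0 \<Longrightarrow> phib k h \<rho> t > 0"
  unfolding phib_def by simp

lemma phib_alt: "t > 0 \<Longrightarrow> phib k h \<rho> t = \<rho>^k * exp (h * t) / t^k"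
  unfolding phib_def by (simp add: exp_diff exp_of_nat_mult)

lemma cont_phib: "continuous_on S (\<lambda>t. t * phib k h \<rho> t)" if "\<forall>t\<in>S. t > 0"
  unfolding phib_def using that by (auto intro!: continuous_intros)

lemma Wb_deriv:
  assumes "\<rho> > 0" "t > \<rho> / 2"
  shows "DERIV (Wb k h \<rho>) t :> t * phib k h \<rho> t"
proof -
  have c: "continuous_on {\<rho>/2..t+1} (\<lambda>s. s * phib k h \<rho> s)"
    by (rule cont_phib) (use assms in auto)
  have "((\<lambda>u. integral {\<rho>/2..u} (\<lambda>s. s * phib k h \<rho> s)) has_real_derivative t * phib k h \<rho> t) (at t within {\<rho>/2..t+1})"
    by (rule integral_has_real_derivative[OF c]) (use assms in auto)
  moreover have "at t within {\<rho>/2..t+1} = at t" by (rule at_within_Icc_at) (use assms in auto)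
  ultimately show ?thesis unfolding Wb_def[abs_def] by simp
qed

lemma bump_deriv:
  assumes "\<rho> > 0"
  shows "(bump k h \<rho> c has_derivative (\<lambda>v. gradb k h \<rho> c x \<bullet> v)) (at x)"
proof -
  have t: "tau \<rho> c x > \<rho> / 2" using tau_ge[OF assms, of c x] assms by linarith
  have "((\<lambda>x. Wb k h \<rho> (tau \<rho> c x)) has_derivative
      (\<lambda>v. (tau \<rho> c x * phib k h \<rho> (tau \<rho> c x)) * (((x - c) \<bullet> v) / tau \<rho> c x))) (at x)"
    using has_derivative_compose[OF tau_deriv[OF assms] has_field_derivative_imp_has_derivative[OF Wb_deriv[OF assms t]]]
    by (simp add: o_def)
  moreover have "(\<lambda>v. (tau \<rho> c x * phib k h \<rho> (tau \<rho> c x)) * (((x - c) \<bullet> v) / tau \<rho> c x))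
      = (\<lambda>v. gradb k h \<rho> c x \<bullet> v)"
    using tau_pos[OF assms, of c x] by (auto simp: fun_eq_iff gradb_def)
  ultimately show ?thesis unfolding bump_def[abs_def] by simp
qed

lemma gradb_deriv:
  assumes "\<rho> > 0"
  shows "(gradb k h \<rho> c has_derivative (\<lambda>v. hessb k h \<rho> c x *v v)) (at x)"
proof -
  define T where "T = tau \<rho> c x"
  have Tp: "T > 0" using tau_pos[OF assms] by (simp add: T_def)
  have d1: "((\<lambda>x. phib k h \<rho> (tau \<rho> c x)) has_derivative
      (\<lambda>v. (phib k h \<rho> T * (h - real k / T)) * (((x - c) \<bullet> v) / T))) (at x)"
    using has_derivative_compose[OF tau_deriv[OF assms] has_field_derivative_imp_has_derivative[OF phib_deriv[OF tau_pos[OF assms]]]]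
    by (simp add: o_def T_def)
  have d2: "((\<lambda>x. x - c) has_derivative (\<lambda>v. v)) (at x)" by (intro derivative_eq_intros) auto
  have "((\<lambda>x. phib k h \<rho> (tau \<rho> c x) *\<^sub>R (x - c)) has_derivative
      (\<lambda>v. phib k h \<rho> (tau \<rho> c x) *\<^sub>R v + ((phib k h \<rho> T * (h - real k / T)) * (((x - c) \<bullet> v) / T)) *\<^sub>R (x - c))) (at x)"
    by (rule has_derivative_scaleR[OF d1 d2])
  moreover have "(\<lambda>v. phib k h \<rho> (tau \<rho> c x) *\<^sub>R v + ((phib k h \<rho> T * (h - real k / T)) * (((x - c) \<bullet> v) / T)) *\<^sub>R (x - c))
      = (\<lambda>v. hessb k h \<rho> c x *v v)"
    by (auto simp: fun_eq_iff hessb_def matrix_vector_mult_add_rdistrib scaleR_matrix_vector_assoc[symmetric]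
        outer_mv T_def)
  ultimately show ?thesis unfolding gradb_def[abs_def] by simp
qed

lemma cont_tau: "continuous_on S (tau \<rho> c)"
  unfolding tau_def[abs_def] by (intro continuous_intros)

lemma isCont_tau: "\<rho> > 0 \<Longrightarrow> isCont (tau \<rho> c) x"
  using has_derivative_continuous[OF tau_deriv] by blast

lemma isCont_phitau: "\<rho> > 0 \<Longrightarrow> isCont (\<lambda>x. phib k h \<rho> (tau \<rho> c x)) x"
  by (rule isCont_o2[OF isCont_tau DERIV_isCont[OF phib_deriv[OF tau_pos]]]) auto

lemma cont_outer: "continuous_on S (\<lambda>x::real^'n. outer (x - c))"
  unfolding outer_def by (intro continuous_intros)

lemma isCont_outer: "isCont (\<lambda>x::real^'n. outer (x - c)) x"
  using cont_outer[of UNIV c] by (simp add: continuous_on_eq_continuous_at)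

lemma cont_hessb: "\<rho> > 0 \<Longrightarrow> continuous_on S (hessb k h \<rho> c)"
  apply (rule continuous_at_imp_continuous_on)
  unfolding hessb_def[abs_def]
  using tau_pos[of \<rho> c]
  by (auto intro!: continuous_intros isCont_phitau isCont_tau isCont_outer simp: less_irrefl)
    (metis less_irrefl)+

lemma cont_gradb: "\<rho> > 0 \<Longrightarrow> continuous_on S (gradb k h \<rho> c)"
  apply (rule continuous_at_imp_continuous_on)
  using has_derivative_continuous[OF gradb_deriv] by blast

lemma cont_bump: "\<rho> > 0 \<Longrightarrow> continuous_on S (bump k h \<rho> c)"
  apply (rule continuous_at_imp_continuous_on)
  using has_derivative_continuous[OF bump_deriv] by blast

lemma core_ineq:
  fixes \<phi> \<tau> m \<rho> h q :: real and k :: nat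
  assumes \<rho>: "\<rho> > 0" and \<tau>: "\<tau> > 0" and m: "m \<ge> 0" and tm: "\<tau>^2 = \<rho>^2 + m^2"
    and \<phi>: "\<phi> > 0" and h: "h \<ge> 0" and hk: "h * \<tau> \<le> real k" and q: "0 \<le> q" "q \<le> m^2"
  shows "\<phi> * (real k * \<rho>^2 / 2) / \<tau>^2 \<le> \<phi> * real k + \<phi> * (h - real k / \<tau>) / \<tau> * q - h * (\<phi> * m)"
proof -
  define N where "N = real k * \<tau>^2 + (h * \<tau> - real k) * q - h * m * \<tau>^2"
  have E: "\<phi> * real k + \<phi> * (h - real k / \<tau>) / \<tau> * q - h * (\<phi> * m) = \<phi> * N / \<tau>^2"
    using \<tau> by (simp add: N_def field_simps power2_eq_square)
  have mt: "m \<le> \<tau>"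
  proof -
    have "m^2 \<le> \<tau>^2" using tm by simp
    then show ?thesis using \<tau> m by (simp add: power2_le_iff_abs_le)
  qed
  have "(h * \<tau> - real k) * m^2 \<le> (h * \<tau> - real k) * q"
    using hk q by (intro mult_left_mono_neg) auto
  then have N1: "real k * \<tau>^2 + (h * \<tau> - real k) * m^2 - h * m * \<tau>^2 \<le> N" by (simp add: N_def)
  have N2: "real k * \<tau>^2 + (h * \<tau> - real k) * m^2 - h * m * \<tau>^2 = real k * \<rho>^2 - (h * \<tau>) * (m * (\<tau> - m))"
  proof -
    have tm': "\<rho>^2 = \<tau>^2 - m^2" using tm by simp
    show ?thesis unfolding tm' by (simp add: algebra_simps power2_eq_square)
  qed
  have mm: "0 \<le> m * (\<tau> - m)" using m mt by simp
  have "(h * \<tau>) * (m * (\<tau> - m)) \<le> real k * (m * (\<tau> - m))"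
    using hk mm by (rule mult_right_mono)
  also have "m * (\<tau> - m) \<le> \<rho>^2 / 2"
  proof -
    have "0 \<le> (\<tau> - m)^2" by simp
    then show ?thesis using tm by (simp add: algebra_simps power2_eq_square)
  qed
  then have "real k * (m * (\<tau> - m)) \<le> real k * (\<rho>^2 / 2)" by (intro mult_left_mono) auto
  finally have "real k * \<rho>^2 / 2 \<le> N" using N1 N2 by simp
  then have "\<phi> * (real k * \<rho>^2 / 2) \<le> \<phi> * N" using \<phi> by (intro mult_left_mono) auto
  then have "\<phi> * (real k * \<rho>^2 / 2) / \<tau>^2 \<le> \<phi> * N / \<tau>^2" using \<tau> by (intro divide_right_mono) auto
  then show ?thesis using E by simp
qed

lemma bessel:
  fixes u :: "'n \<Rightarrow> real^'n"
  assumes uS: "onf u S" and fS: "finite S"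
  shows "(\<Sum>i\<in>S. (z \<bullet> u i)^2) \<le> z \<bullet> z"
proof -
  define p where "p = (\<Sum>i\<in>S. (z \<bullet> u i) *\<^sub>R u i)"
  define q where "q = (\<Sum>i\<in>S. (z \<bullet> u i)^2)"
  have zp: "z \<bullet> p = q" by (simp add: p_def q_def inner_sum_right power2_eq_square)
  have up: "u j \<bullet> p = z \<bullet> u j" if j: "j \<in> S" for j
  proof -
    have "u j \<bullet> p = (\<Sum>i\<in>S. (z \<bullet> u i) * (u j \<bullet> u i))" by (simp add: p_def inner_sum_right)
    also have "\<dots> = (\<Sum>i\<in>S. if i = j then z \<bullet> u j else 0)"
      using uS j by (intro sum.cong) (auto simp: onf_def)
    also have "\<dots> = z \<bullet> u j" using fS j by simp
    finally show ?thesis .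
  qed
  have pp: "p \<bullet> p = q"
  proof -
    have "p \<bullet> p = (\<Sum>j\<in>S. (z \<bullet> u j) * (u j \<bullet> p))" by (simp add: p_def inner_sum_left)
    also have "\<dots> = (\<Sum>j\<in>S. (z \<bullet> u j)^2)" by (intro sum.cong) (auto simp: up power2_eq_square)
    finally show ?thesis by (simp add: q_def)
  qed
  have "0 \<le> (z - p) \<bullet> (z - p)" by simp
  also have "\<dots> = z \<bullet> z - 2 * (z \<bullet> p) + p \<bullet> p" by (simp add: inner_diff_left inner_diff_right inner_commute)
  finally show ?thesis using zp pp by (simp add: q_def)
qed

lemma frame_hessb:
  fixes u :: "'n \<Rightarrow> real^'n" and x c :: "real^'n"
  assumes uS: "onf u S"
  shows "(\<Sum>i\<in>S. u i \<bullet> (hessb k h \<rho> c x *v u i)) =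
    phib k h \<rho> (tau \<rho> c x) * real (card S) +
    (phib k h \<rho> (tau \<rho> c x) * (h - real k / tau \<rho> c x) / tau \<rho> c x) * (\<Sum>i\<in>S. ((x - c) \<bullet> u i)^2)"
proof -
  define a where "a = phib k h \<rho> (tau \<rho> c x)"
  define b where "b = phib k h \<rho> (tau \<rho> c x) * (h - real k / tau \<rho> c x) / tau \<rho> c x"
  have one: "u i \<bullet> (hessb k h \<rho> c x *v u i) = a + b * ((x - c) \<bullet> u i)^2" if "i \<in> S" for i
  proof -
    have "u i \<bullet> u i = 1" using uS that by (simp add: onf_def)
    then show ?thesis
      by (simp add: hessb_def matrix_vector_mult_add_rdistrib scaleR_matrix_vector_assoc[symmetric]
        outer_mv a_def[symmetric] inner_add_right power2_eq_square inner_commute) (simp add: b_def a_def)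
  qed
  have "(\<Sum>i\<in>S. u i \<bullet> (hessb k h \<rho> c x *v u i)) = (\<Sum>i\<in>S. a + b * ((x - c) \<bullet> u i)^2)"
    by (intro sum.cong) (auto simp: one)
  also have "\<dots> = a * real (card S) + b * (\<Sum>i\<in>S. ((x - c) \<bullet> u i)^2)"
    by (simp add: sum.distrib sum_distrib_left)
  finally show ?thesis by (simp add: a_def b_def)
qed

lemma bump_frame:
  fixes u :: "'n \<Rightarrow> real^'n" and x c :: "real^'n"
  assumes \<rho>: "\<rho> > 0" and h: "h \<ge> 0" and hk: "h * tau \<rho> c x \<le> real k"
    and uS: "onf u S" and cS: "card S = k" and k1: "k \<ge> 1"
  shows "(if norm (x - c) < \<rho> then 1 / (4 * 2^k) else 0)
     \<le> (\<Sum>i\<in>S. u i \<bullet> (hessb k h \<rho> c x *v u i)) - h * norm (gradb k h \<rho> c x)"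
proof -
  have fS: "finite S" using cS k1 by (metis card.infinite not_one_le_zero)
  define \<tau> where "\<tau> = tau \<rho> c x"
  define m where "m = norm (x - c)"
  define q where "q = (\<Sum>i\<in>S. ((x - c) \<bullet> u i)^2)"
  define \<phi> where "\<phi> = phib k h \<rho> \<tau>"
  have \<tau>: "\<tau> > 0" using tau_pos[OF \<rho>] by (simp add: \<tau>_def)
  have \<phi>: "\<phi> > 0" using phib_pos[OF \<rho>] by (simp add: \<phi>_def)
  have m: "m \<ge> 0" by (simp add: m_def)
  have tm: "\<tau>^2 = \<rho>^2 + m^2" using tau_sq[of \<rho> c x] by (simp add: \<tau>_def m_def dot_square_norm)
  have q: "0 \<le> q" "q \<le> m^2"
    using bessel[OF uS fS, of "x - c"] by (auto simp: q_def m_def dot_square_norm intro: sum_nonneg)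
  have ng: "norm (gradb k h \<rho> c x) = \<phi> * m"
    using \<phi> by (simp add: gradb_def \<phi>_def \<tau>_def m_def)
  have R: "(\<Sum>i\<in>S. u i \<bullet> (hessb k h \<rho> c x *v u i)) - h * norm (gradb k h \<rho> c x)
      = \<phi> * real k + \<phi> * (h - real k / \<tau>) / \<tau> * q - h * (\<phi> * m)"
    by (simp add: frame_hessb[OF uS] cS ng \<phi>_def \<tau>_def q_def)
  have core: "\<phi> * (real k * \<rho>^2 / 2) / \<tau>^2 \<le> \<phi> * real k + \<phi> * (h - real k / \<tau>) / \<tau> * q - h * (\<phi> * m)"
    by (rule core_ineq[OF \<rho> \<tau> m tm \<phi> h _ q]) (use hk in \<open>simp add: \<tau>_def\<close>)
  have L0: "0 \<le> \<phi> * (real k * \<rho>^2 / 2) / \<tau>^2" using \<phi> by simp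
  show ?thesis
  proof (cases "norm (x - c) < \<rho>")
    case False
    then show ?thesis using R core L0 by simp
  next
    case True
    then have mr: "m^2 \<le> \<rho>^2" using m by (simp add: m_def power_mono)
    then have t2: "\<tau>^2 \<le> 2 * \<rho>^2" using tm by simp
    have "2 * \<rho>^2 \<le> (2 * \<rho>)^2" by (simp add: power2_eq_square)
    then have "\<tau>^2 \<le> (2 * \<rho>)^2" using t2 by linarith
    then have t2r: "\<tau> \<le> 2 * \<rho>" by (rule power2_le_imp_le) (use \<rho> in simp)
    have "\<tau>^k \<le> (2 * \<rho>)^k" using t2r \<tau> by (intro power_mono) auto
    then have tk: "\<tau>^k \<le> 2^k * \<rho>^k" by (simp add: power_mult_distrib)
    have "\<phi> = \<rho>^k * exp (h * \<tau>) / \<tau>^k" using phib_alt[OF \<tau>] by (simp add: \<phi>_def)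
    also have "\<dots> \<ge> \<rho>^k / \<tau>^k"
    proof -
      have "1 \<le> exp (h * \<tau>)" using h \<tau> by simp
      then have "\<rho>^k * 1 \<le> \<rho>^k * exp (h * \<tau>)" using \<rho> by (intro mult_left_mono) auto
      then show ?thesis using \<tau> by (intro divide_right_mono) auto
    qed
    finally have "\<rho>^k / \<tau>^k \<le> \<phi>" .
    moreover have "1 / 2^k \<le> \<rho>^k / \<tau>^k"
    proof -
      have e: "\<rho>^k / (2^k * \<rho>^k) = 1 / 2^k" using \<rho> by simp
      have "\<rho>^k / (2^k * \<rho>^k) \<le> \<rho>^k / \<tau>^k"
        using tk \<tau> \<rho> by (intro divide_left_mono) auto
      then show ?thesis unfolding e .
    qed
    ultimately have phi2: "1 / 2^k \<le> \<phi>" by linarith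
    have k4: "real k / 4 \<le> (real k * \<rho>^2 / 2) / \<tau>^2"
    proof -
      have e: "(real k * \<rho>^2 / 2) / (2 * \<rho>^2) = real k / 4" using \<rho> by simp
      have "(real k * \<rho>^2 / 2) / (2 * \<rho>^2) \<le> (real k * \<rho>^2 / 2) / \<tau>^2"
        using t2 \<tau> \<rho> by (intro divide_left_mono) auto
      then show ?thesis unfolding e .
    qed
    have "1 / (4 * 2^k) = (1 / 2^k) * (1 / (4::real))" by simp
    also have "\<dots> \<le> (1 / 2^k) * (real k / 4)" using k1 by (intro mult_left_mono) auto
    finally have "1 / (4 * 2^k) \<le> (1 / 2^k) * (real k / 4)" .
    also have "\<dots> \<le> \<phi> * ((real k * \<rho>^2 / 2) / \<tau>^2)"
      using phi2 k4 \<phi> by (intro mult_mono) auto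
    finally show ?thesis using R core True by simp
  qed
qed

definition Gk :: "nat \<Rightarrow> real \<Rightarrow> real" where
  "Gk k s = (if k = 2 then ln s else s powr (2 - real k) / (2 - real k))"

lemma integrand_eq:
  assumes "s > 0"
  shows "s * phib k h \<rho> s = \<rho>^k * exp (h * s) * s powr (1 - real k)"
proof -
  have "s * exp (h * s - real k * ln s) = exp (ln s) * exp (h * s - real k * ln s)" using assms by simp
  also have "\<dots> = exp (h * s) * exp ((1 - real k) * ln s)" by (simp add: exp_add[symmetric] algebra_simps)
  also have "exp ((1 - real k) * ln s) = s powr (1 - real k)" using assms by (simp add: powr_def)
  finally show ?thesis by (simp add: phib_def mult_ac)
qed

lemma Gk_deriv:
  assumes "s > 0"
  shows "DERIV (Gk k) s :> s powr (1 - real k)"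
proof (cases "k = 2")
  case True
  have "DERIV ln s :> 1 / s" using assms by (auto intro!: derivative_eq_intros)
  moreover have "s powr (1 - real k) = 1 / s" using True assms by (simp add: powr_minus_divide)
  ultimately show ?thesis using True by (simp add: Gk_def[abs_def])
next
  case False
  then have ne: "2 - real k \<noteq> 0" by simp
  have "DERIV (\<lambda>s. s powr (2 - real k) / (2 - real k)) s :> ((2 - real k) * s powr (2 - real k - 1)) / (2 - real k)"
    using has_real_derivative_powr[OF assms, of "2 - real k"] by (intro DERIV_cdivide) auto
  moreover have "((2 - real k) * s powr (2 - real k - 1)) / (2 - real k) = s powr (1 - real k)"
  proof -
    have "2 - real k - 1 = 1 - real k" by simp
    then show ?thesis using ne by simp
  qed
  moreover have "Gk k = (\<lambda>s. s powr (2 - real k) / (2 - real k))" using False by (simp add: Gk_def[abs_def])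
  ultimately show ?thesis by simp
qed

lemma Gk_integral:
  assumes "0 < a" "a \<le> b"
  shows "((\<lambda>s. s powr (1 - real k)) has_integral (Gk k b - Gk k a)) {a..b}"
proof (rule fundamental_theorem_of_calculus[OF assms(2)])
  fix x assume "x \<in> {a..b}"
  then have "x > 0" using assms by auto
  then show "(Gk k has_vector_derivative x powr (1 - real k)) (at x within {a..b})"
    using Gk_deriv has_real_derivative_iff_has_vector_derivative
    by (metis has_vector_derivative_at_within)
qed

lemma Wb_upper:
  assumes \<rho>: "\<rho> > 0" and T: "\<rho> / 2 \<le> T" and h: "h \<ge> 0" and hT: "h * T \<le> real k"
  shows "Wb k h \<rho> T \<le> \<rho>^k * exp (real k) * (Gk k T - Gk k (\<rho>/2))"
proof -
  have a: "0 < \<rho> / 2" using \<rho> by simp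
  have I: "((\<lambda>s. \<rho>^k * exp (real k) * s powr (1 - real k)) has_integral (\<rho>^k * exp (real k) * (Gk k T - Gk k (\<rho>/2)))) {\<rho>/2..T}"
    using has_integral_mult_right[OF Gk_integral[OF a T]] .
  have c: "continuous_on {\<rho>/2..T} (\<lambda>s. s * phib k h \<rho> s)" by (rule cont_phib) (use \<rho> in auto)
  have "integral {\<rho>/2..T} (\<lambda>s. s * phib k h \<rho> s) \<le> integral {\<rho>/2..T} (\<lambda>s. \<rho>^k * exp (real k) * s powr (1 - real k))"
  proof (rule integral_le)
    show "(\<lambda>s. s * phib k h \<rho> s) integrable_on {\<rho>/2..T}" using c by (rule integrable_continuous_interval)
    show "(\<lambda>s. \<rho>^k * exp (real k) * s powr (1 - real k)) integrable_on {\<rho>/2..T}" using I by blast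
  next
    fix s assume s: "s \<in> {\<rho>/2..T}"
    then have sp: "s > 0" using \<rho> by auto
    have "h * s \<le> h * T" using s h by (intro mult_left_mono) auto
    then have "exp (h * s) \<le> exp (real k)" using hT by simp
    then have "\<rho>^k * exp (h * s) * s powr (1 - real k) \<le> \<rho>^k * exp (real k) * s powr (1 - real k)"
      using \<rho> by (intro mult_right_mono mult_left_mono) auto
    then show "s * phib k h \<rho> s \<le> \<rho>^k * exp (real k) * s powr (1 - real k)"
      using integrand_eq[OF sp] by simp
  qed
  then show ?thesis using integral_unique[OF I] by (simp only: Wb_def)
qed

lemma Wb_nonneg:
  assumes \<rho>: "\<rho> > 0" and t: "\<rho> / 2 \<le> t"
  shows "0 \<le> Wb k h \<rho> t"
  unfolding Wb_def
proof (rule integral_nonneg)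
  have c: "continuous_on {\<rho>/2..t} (\<lambda>s. s * phib k h \<rho> s)" by (rule cont_phib) (use \<rho> in auto)
  then show "(\<lambda>s. s * phib k h \<rho> s) integrable_on {\<rho>/2..t}" by (rule integrable_continuous_interval)
  fix s assume "s \<in> {\<rho>/2..t}"
  then show "0 \<le> s * phib k h \<rho> s" using \<rho> phib_pos[OF \<rho>, of k h s] by auto
qed

lemma Wb_mono:
  assumes \<rho>: "\<rho> > 0" and t: "\<rho> \<le> t" "t \<le> T"
  shows "Wb k h \<rho> t \<le> Wb k h \<rho> T"
proof (rule DERIV_nonneg_imp_nondecreasing[OF t(2)])
  fix x assume x: "t \<le> x" "x \<le> T"
  then have "x > \<rho> / 2" using t \<rho> by auto
  then show "\<exists>y. DERIV (Wb k h \<rho>) x :> y \<and> 0 \<le> y"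
    using Wb_deriv[OF \<rho>] phib_pos[OF \<rho>, of k h x] \<rho> by (intro exI conjI) auto
qed

lemma EE:
  fixes \<rho> :: real
  assumes \<rho>: "\<rho> > 0" and k3: "k \<ge> 3"
  shows "\<rho>^k * (\<rho>/2) powr (2 - real k) = \<rho>^2 * 2^(k-2)"
proof -
  have e1: "(\<rho>/2) powr (2 - real k) = \<rho> powr (2 - real k) / 2 powr (2 - real k)" using \<rho> by (simp add: powr_divide)
  have e2: "\<rho>^k = \<rho> powr (real k)" using \<rho> by (simp add: powr_realpow)
  have e3: "\<rho> powr (real k) * \<rho> powr (2 - real k) = \<rho>^2"
  proof -
    have "\<rho> powr (real k) * \<rho> powr (2 - real k) = \<rho> powr (real k + (2 - real k))" by (simp only: powr_add)
    also have "\<dots> = \<rho> powr (real (2::nat))" by simp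
    also have "\<dots> = \<rho>^2" using \<rho> by (simp only: powr_realpow)
    finally show ?thesis .
  qed
  have e4: "1 / 2 powr (2 - real k) = (2::real) powr (real k - 2)"
    by (simp add: powr_diff)
  have e5: "(2::real) powr (real k - 2) = 2^(k-2)"
  proof -
    have "real k - 2 = real (k - 2)" using k3 by (simp add: of_nat_diff)
    then show ?thesis by (simp only: powr_realpow)
  qed
  have "\<rho>^k * (\<rho>/2) powr (2 - real k) = (\<rho> powr (real k) * \<rho> powr (2 - real k)) * (1 / 2 powr (2 - real k))"
    unfolding e1 e2 by simp
  also have "\<dots> = \<rho>^2 * 2^(k-2)" unfolding e3 e4 e5 ..
  finally show ?thesis .
qed

lemma bump_mag:
  assumes \<rho>: "\<rho> > 0" and h: "h \<ge> 0" and k1: "k \<ge> 1" and R: "4 * \<rho> \<le> R"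
    and t: "\<rho> \<le> t" "t \<le> T" and T2: "T \<le> 2 * R" and hT: "h * T \<le> real k"
  shows "Wb k h \<rho> t \<le> 2^(k+1) * exp (real k) * Psi k R \<rho>"
proof -
  have Rp: "R > 0" using \<rho> R by linarith
  have T: "\<rho> / 2 \<le> T" using t \<rho> by linarith
  have Tp: "T > 0" using t \<rho> by linarith
  have W: "Wb k h \<rho> t \<le> \<rho>^k * exp (real k) * (Gk k T - Gk k (\<rho>/2))"
    using Wb_mono[OF \<rho> t, of k h] Wb_upper[OF \<rho> T h hT] by linarith
  have ek: "exp (real k) > 0" by simp
  consider "k = 1" | "k = 2" | "k \<ge> 3" using k1 by linarith
  then show ?thesis
  proof cases
    case 1
    have "Gk k T - Gk k (\<rho>/2) = T - \<rho>/2" using 1 Tp \<rho> by (simp add: Gk_def)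
    also have "\<dots> \<le> 2 * R" using T2 \<rho> by linarith
    finally have "\<rho>^k * exp (real k) * (Gk k T - Gk k (\<rho>/2)) \<le> \<rho>^k * exp (real k) * (2 * R)"
      using \<rho> by (intro mult_left_mono) auto
    also have "\<dots> \<le> 2^(k+1) * exp (real k) * Psi k R \<rho>" using 1 \<rho> Rp by (simp add: Psi_def)
    finally show ?thesis using W by linarith
  next
    case 2
    have lRr: "ln 4 \<le> ln (R / \<rho>)" using R \<rho> by (simp add: pos_le_divide_eq mult.commute)
    have l4: "ln (4::real) \<ge> 0" by simp
    have "Gk k T - Gk k (\<rho>/2) = ln T - ln (\<rho>/2)" using 2 by (simp add: Gk_def)
    also have "\<dots> \<le> ln (2 * R) - ln (\<rho>/2)" using T2 Tp by simp
    also have "ln (2 * R) - ln (\<rho>/2) = ln 4 + ln (R / \<rho>)"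
    proof -
      have l4': "ln (4::real) = ln 2 + ln 2" using ln_mult[of 2 2] by simp
      show ?thesis using Rp \<rho> by (simp add: ln_mult ln_div l4')
    qed
    also have "\<dots> \<le> 2 * ln (R / \<rho>)" using lRr by linarith
    finally have G: "Gk k T - Gk k (\<rho>/2) \<le> 2 * ln (R / \<rho>)" .
    have "\<rho>^k * exp (real k) * (Gk k T - Gk k (\<rho>/2)) \<le> \<rho>^k * exp (real k) * (2 * ln (R / \<rho>))"
      using G \<rho> by (intro mult_left_mono) auto
    also have "\<dots> \<le> 2^(k+1) * exp (real k) * Psi k R \<rho>"
    proof -
      have "0 \<le> ln (R / \<rho>)" using lRr l4 by linarith
      then have "Psi k R \<rho> = \<rho>^2 * ln (R / \<rho>)" using 2 by (simp add: Psi_def)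
      moreover have "\<rho>^2 * exp 2 * (2 * ln (R / \<rho>)) \<le> 8 * exp 2 * (\<rho>^2 * ln (R / \<rho>))"
        using \<open>0 \<le> ln (R / \<rho>)\<close> by (simp add: mult_ac)
      ultimately show ?thesis using 2 by simp
    qed
    finally show ?thesis using W by linarith
  next
    case 3
    have ne: "2 - real k < 0" using 3 by simp
    have "Gk k T - Gk k (\<rho>/2) = (T powr (2 - real k) - (\<rho>/2) powr (2 - real k)) / (2 - real k)"
      using 3 by (simp add: Gk_def diff_divide_distrib)
    also have "\<dots> = ((\<rho>/2) powr (2 - real k) - T powr (2 - real k)) / (real k - 2)"
      by (metis minus_diff_eq divide_minus_right divide_minus_left)
    also have "\<dots> \<le> (\<rho>/2) powr (2 - real k) / (real k - 2)"
      using 3 by (intro divide_right_mono) auto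
    also have "\<dots> \<le> (\<rho>/2) powr (2 - real k)"
    proof -
      have "1 \<le> real k - 2" using 3 by simp
      moreover have "0 \<le> (\<rho>/2) powr (2 - real k)" by simp
      ultimately have "(\<rho>/2) powr (2 - real k) / (real k - 2) \<le> (\<rho>/2) powr (2 - real k) / 1"
        by (intro divide_left_mono) auto
      then show ?thesis by simp
    qed
    finally have G: "Gk k T - Gk k (\<rho>/2) \<le> (\<rho>/2) powr (2 - real k)" .
    have E: "\<rho>^k * (\<rho>/2) powr (2 - real k) = \<rho>^2 * 2^(k-2)" by (rule EE[OF \<rho> 3])
    have "\<rho>^k * exp (real k) * (Gk k T - Gk k (\<rho>/2)) \<le> \<rho>^k * exp (real k) * (\<rho>/2) powr (2 - real k)"
      using G \<rho> by (intro mult_left_mono) auto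
    also have "\<dots> = exp (real k) * (\<rho>^2 * 2^(k-2))" using E by (simp add: mult_ac)
    also have "\<dots> \<le> exp (real k) * (\<rho>^2 * 2^(k+1))"
    proof -
      have "(2::real)^(k-2) \<le> 2^(k+1)" by (rule power_increasing) auto
      then show ?thesis by (intro mult_left_mono) auto
    qed
    also have "\<dots> = 2^(k+1) * exp (real k) * Psi k R \<rho>" using 3 by (simp add: Psi_def)
    finally show ?thesis using W by linarith
  qed
qed

lemma usc_of_cont: "continuous_on S w \<Longrightarrow> usc_on S w"
  unfolding usc_on_def continuous_on_iff
proof (intro ballI allI impI)
  fix x a
  assume c: "\<forall>x\<in>S. \<forall>e>0. \<exists>d>0. \<forall>x'\<in>S. dist x' x < d \<longrightarrow> dist (w x') (w x) < e"
    and x: "x \<in> S" and a: "w x < a"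
  obtain d where d: "d > 0" "\<forall>x'\<in>S. dist x' x < d \<longrightarrow> dist (w x') (w x) < a - w x"
    using c[rule_format, OF x, of "a - w x"] a by auto
  show "\<exists>e>0. \<forall>y\<in>S. dist y x < e \<longrightarrow> w y < a"
    using d by (intro exI[of _ d]) (auto simp: dist_real_def)
qed

lemma mv_sum: "(\<Sum>j\<in>J. M j) *v v = (\<Sum>j\<in>J. (M j :: real^'n^'m) *v v)"
  by (induction J rule: infinite_finite_induct) (auto simp: matrix_vector_mult_add_rdistrib)

lemma Psi_nonneg: "R \<ge> 0 \<Longrightarrow> t \<ge> 0 \<Longrightarrow> Psi k R t \<ge> 0"
  unfolding Psi_def by auto

lemma diameter_pos:
  fixes \<Omega> :: "(real^'n) set"
  assumes "open \<Omega>" "bounded \<Omega>" "x \<in> \<Omega>"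
  shows "diameter \<Omega> > 0"
proof -
  obtain e where e: "e > 0" "ball x e \<subseteq> \<Omega>" using assms open_contains_ball by blast
  obtain i :: 'n where True by blast
  define y where "y = x + (e/2) *\<^sub>R axis i 1"
  have "dist x y = e / 2" using e by (simp add: y_def dist_norm)
  then have "y \<in> \<Omega>" using e by auto
  then have "dist x y \<le> diameter \<Omega>" using diameter_bounded_bound[OF assms(2) assms(3)] by blast
  then show ?thesis using \<open>dist x y = e / 2\<close> e by linarith
qed

lemma tau_le:
  fixes x c e :: "real^'n"
  assumes \<rho>: "\<rho> > 0" "\<rho> \<le> \<delta>" and ce: "dist c e < \<rho>" and xe: "dist x e \<le> R"
  shows "tau \<rho> c x \<le> R + 2 * \<delta>"
proof -
  have "tau \<rho> c x \<le> \<rho> + norm (x - c)"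
  proof -
    have "(tau \<rho> c x)^2 = \<rho>^2 + (norm (x - c))^2" by (simp add: tau_sq dot_square_norm)
    also have "\<dots> \<le> (\<rho> + norm (x - c))^2"
    proof -
      have "0 \<le> 2 * \<rho> * norm (x - c)" using \<rho> by simp
      then show ?thesis by (simp add: power2_sum)
    qed
    finally have "(tau \<rho> c x)^2 \<le> (\<rho> + norm (x - c))^2" .
    then show ?thesis by (rule power2_le_imp_le) (use \<rho> in simp)
  qed
  also have "norm (x - c) \<le> dist x e + dist e c" using dist_triangle[of x c e] by (simp add: dist_norm)
  finally show ?thesis using ce xe \<rho> by (simp add: dist_commute)
qed

lemma construct:
  fixes \<Omega> E :: "(real^'n) set" and h Q :: real and k :: nat
  assumes kn: "k \<le> CARD('n)" and k1: "1 \<le> k"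
    and \<Omega>: "open \<Omega>" "bounded \<Omega>" and E: "compact E" "E \<subseteq> \<Omega>" "E \<noteq> {}"
    and h: "0 \<le> h" and hk: "h * diameter \<Omega> < real k"
    and Q: "ennreal Q > gen_hausdorff (Psi k (diameter \<Omega>)) E"
  shows "\<exists>U w g H. open U \<and> E \<subseteq> U \<and> compact (closure U) \<and> closure U \<subseteq> \<Omega> \<and>
             C2_closure \<Omega> w g H \<and> (\<forall>x\<in>closure \<Omega>. w x < 0) \<and>
             (\<forall>x\<in>closure \<Omega>. - ((4 * 2^k * (2^(k+1) * exp (real k))) * Q) \<le> w x) \<and>
             (\<forall>x\<in>\<Omega>. \<forall>u S. onf u S \<and> card S = k \<longrightarrow>
                 indicator U x \<le> (\<Sum>i\<in>S. u i \<bullet> (H x *v u i)) - h * norm (g x))"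
proof -
  define R where "R = diameter \<Omega>"
  define C1 where "C1 = 4 * 2^k * (2^(k+1) * exp (real k))"
  define Cp where "Cp = 2^(k+1) * exp (real k)"
  define ki where "ki = (4 * 2^k :: real)"
  have C1: "C1 = ki * Cp" by (simp add: C1_def ki_def Cp_def)
  have ki: "ki > 0" by (simp add: ki_def)
  have Cp: "Cp > 0" by (simp add: Cp_def)
  obtain e0 where e0: "e0 \<in> E" using E(3) by blast
  have R: "R > 0" unfolding R_def using diameter_pos[OF \<Omega> ] e0 E(2) by blast
  have Qp: "Q > 0"
  proof -
    have "0 < ennreal Q" using Q by (metis not_gr_zero not_less_zero)
    then show ?thesis by simp
  qed
  obtain d where d: "d > 0" "(\<Union>x\<in>E. cball x d) \<subseteq> \<Omega>"
    using compact_subset_open_imp_cball_epsilon_subset[OF E(1) \<Omega>(1) E(2)] by blast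
  define \<delta> where "\<delta> = min (d/3) (min (R/4) (if h > 0 then (real k - h * R) / (2 * h) else 1))"
  have \<delta>: "\<delta> > 0" using d R hk by (simp add: \<delta>_def R_def)
  have \<delta>d: "\<delta> \<le> d / 3" and \<delta>R: "\<delta> \<le> R / 4" by (simp_all add: \<delta>_def)
  have hT: "h * (R + 2 * \<delta>) \<le> real k"
  proof (cases "h > 0")
    case True
    then have "\<delta> \<le> (real k - h * R) / (2 * h)" by (simp add: \<delta>_def)
    then have "2 * h * \<delta> \<le> real k - h * R" using True by (simp add: field_simps)
    then show ?thesis by (simp add: algebra_simps)
  next
    case False
    then show ?thesis using h by simp
  qed
  define \<Psi> where "\<Psi> = Psi k R"
  have \<Psi>0: "\<Psi> t \<ge> 0" if "t \<ge> 0" for t using Psi_nonneg[of R t k] R that by (simp add: \<Psi>_def)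
  have "(INF rc\<in>{(r, c). (\<forall>j::nat. 0 < r j \<and> r j \<le> \<delta>) \<and> E \<subseteq> (\<Union>j. ball (c j) (r j))}.
          (\<Sum>j. ennreal (\<Psi> (fst rc j)))) < ennreal Q"
    using SUP_lessD[OF Q[unfolded gen_hausdorff_def], of \<delta>] \<delta> by (simp add: \<Psi>_def R_def)
  then obtain r c where rc: "\<forall>j::nat. 0 < r j \<and> r j \<le> \<delta>" "E \<subseteq> (\<Union>j. ball (c j) (r j))"
      and sumQ: "(\<Sum>j. ennreal (\<Psi> (r j))) < ennreal Q"
    unfolding INF_less_iff by auto
  define J0 where "J0 = {j. ball (c j) (r j) \<inter> E \<noteq> {}}"
  have "E \<subseteq> (\<Union>j\<in>J0. ball (c j) (r j))"
  proof
    fix x assume x: "x \<in> E"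
    then obtain j where j: "x \<in> ball (c j) (r j)" using rc(2) by blast
    then have "j \<in> J0" using x by (auto simp: J0_def)
    then show "x \<in> (\<Union>j\<in>J0. ball (c j) (r j))" using j by blast
  qed
  then obtain J where J: "J \<subseteq> J0" "finite J" "E \<subseteq> (\<Union>j\<in>J. ball (c j) (r j))"
    using compactE_image[OF E(1), of J0 "\<lambda>j. ball (c j) (r j)"] by auto
  have rpos: "r j > 0" and rd: "r j \<le> \<delta>" for j using rc(1) by auto
  have sumJ: "(\<Sum>j\<in>J. \<Psi> (r j)) < Q"
  proof -
    have "ennreal (\<Sum>j\<in>J. \<Psi> (r j)) = (\<Sum>j\<in>J. ennreal (\<Psi> (r j)))"
      using \<Psi>0 rpos by (simp add: less_imp_le)
    also have "\<dots> \<le> (\<Sum>j. ennreal (\<Psi> (r j)))"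
      by (rule sum_le_suminf[OF summableI J(2)]) simp
    also have "\<dots> < ennreal Q" by (rule sumQ)
    finally have "ennreal (\<Sum>j\<in>J. \<Psi> (r j)) < ennreal Q" .
    moreover have "0 \<le> (\<Sum>j\<in>J. \<Psi> (r j))" using \<Psi>0 rpos by (simp add: less_imp_le sum_nonneg)
    ultimately show ?thesis by (simp add: ennreal_less_iff)
  qed
  have ej: "\<exists>e\<in>E. dist (c j) e < r j" if "j \<in> J" for j
    using J(1) that by (auto simp: J0_def)
  have bdd_cl: "bounded (closure \<Omega>)" using \<Omega>(2) by (rule bounded_closure)
  have diam_cl: "diameter (closure \<Omega>) = R" using diameter_closure[OF \<Omega>(2)] by (simp add: R_def)
  have tauT: "tau (r j) (c j) x \<le> R + 2 * \<delta>" if jJ: "j \<in> J" and xc: "x \<in> closure \<Omega>" for j x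
  proof -
    obtain e where e: "e \<in> E" "dist (c j) e < r j" using ej[OF jJ] by blast
    have "e \<in> closure \<Omega>" using e E(2) closure_subset by blast
    then have "dist x e \<le> R" using diameter_bounded_bound[OF bdd_cl xc] diam_cl by simp
    then show ?thesis using tau_le[OF rpos rd e(2)] by simp
  qed
  have htau: "h * tau (r j) (c j) x \<le> real k" if "j \<in> J" "x \<in> closure \<Omega>" for j x
  proof -
    have "h * tau (r j) (c j) x \<le> h * (R + 2 * \<delta>)" using tauT[OF that] h by (intro mult_left_mono) auto
    then show ?thesis using hT by linarith
  qed
  have bump_bd: "0 \<le> bump k h (r j) (c j) x \<and> bump k h (r j) (c j) x \<le> Cp * \<Psi> (r j)"
    if "j \<in> J" "x \<in> closure \<Omega>" for j x
  proof
    have tg: "r j \<le> tau (r j) (c j) x" by (rule tau_ge[OF rpos])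
    show "0 \<le> bump k h (r j) (c j) x" unfolding bump_def
      by (rule Wb_nonneg[OF rpos]) (use tg rpos[of j] in linarith)
    have "4 * r j \<le> R" using rd[of j] \<delta>R by linarith
    moreover have "R + 2 * \<delta> \<le> 2 * R" using \<delta>R R by linarith
    moreover have "h * (R + 2 * \<delta>) \<le> real k" by (rule hT)
    ultimately show "bump k h (r j) (c j) x \<le> Cp * \<Psi> (r j)"
      unfolding bump_def Cp_def \<Psi>_def
      using bump_mag[OF rpos h k1 _ tg tauT[OF that]] by (simp add: mult_ac)
  qed
  define U where "U = (\<Union>j\<in>J. ball (c j) (r j))"
  define w where "w = (\<lambda>x. ki * (\<Sum>j\<in>J. bump k h (r j) (c j) x) - C1 * Q)"
  define g where "g = (\<lambda>x. ki *\<^sub>R (\<Sum>j\<in>J. gradb k h (r j) (c j) x))"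
  define H where "H = (\<lambda>x. ki *\<^sub>R (\<Sum>j\<in>J. hessb k h (r j) (c j) x))"
  show ?thesis
  proof (intro exI[of _ U] exI[of _ w] exI[of _ g] exI[of _ H] conjI)
    show "open U" unfolding U_def by auto
    show "E \<subseteq> U" using J(3) by (simp add: U_def)
    define K where "K = (\<Union>j\<in>J. cball (c j) (r j))"
    have UK: "U \<subseteq> K" by (auto simp: U_def K_def)
    have cK: "closed K" unfolding K_def using J(2) by auto
    have bK: "bounded K" unfolding K_def using J(2) by auto
    have clU: "closure U \<subseteq> K" using closure_minimal[OF UK cK] .
    show "compact (closure U)"
      using bounded_subset[OF bK clU] by (simp add: compact_eq_bounded_closed)
    have KO: "K \<subseteq> \<Omega>"
    proof
      fix y assume "y \<in> K"
      then obtain j where j: "j \<in> J" "dist (c j) y \<le> r j" by (auto simp: K_def)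
      obtain e where e: "e \<in> E" "dist (c j) e < r j" using ej[OF j(1)] by blast
      have "dist e y \<le> dist e (c j) + dist (c j) y" by (rule dist_triangle)
      also have "\<dots> < 2 * \<delta>" using e(2) j(2) rd[of j] by (simp add: dist_commute)
      finally have "dist e y \<le> d" using \<delta>d d by linarith
      then have "y \<in> cball e d" by simp
      then show "y \<in> \<Omega>" using d(2) e(1) by blast
    qed
    show "closure U \<subseteq> \<Omega>" using clU KO by blast
    have dw: "(w has_derivative (\<lambda>v. g x \<bullet> v)) (at x)" for x
    proof -
      have "((\<lambda>x. \<Sum>j\<in>J. bump k h (r j) (c j) x) has_derivative
          (\<lambda>v. \<Sum>j\<in>J. gradb k h (r j) (c j) x \<bullet> v)) (at x)"
        by (rule has_derivative_sum) (rule bump_deriv[OF rpos])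
      then have "((\<lambda>x. ki * (\<Sum>j\<in>J. bump k h (r j) (c j) x)) has_derivative
          (\<lambda>v. ki * (\<Sum>j\<in>J. gradb k h (r j) (c j) x \<bullet> v))) (at x)"
        by (rule has_derivative_mult_right)
      then have "(w has_derivative (\<lambda>v. ki * (\<Sum>j\<in>J. gradb k h (r j) (c j) x \<bullet> v) - 0)) (at x)"
        unfolding w_def by (rule has_derivative_diff) (rule has_derivative_const)
      moreover have "(\<lambda>v. ki * (\<Sum>j\<in>J. gradb k h (r j) (c j) x \<bullet> v) - 0) = (\<lambda>v. g x \<bullet> v)"
        by (simp add: fun_eq_iff g_def inner_sum_left)
      ultimately show ?thesis by simp
    qed
    have dg: "(g has_derivative (\<lambda>v. H x *v v)) (at x)" for x
    proof -
      have "((\<lambda>x. \<Sum>j\<in>J. gradb k h (r j) (c j) x) has_derivative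
          (\<lambda>v. \<Sum>j\<in>J. hessb k h (r j) (c j) x *v v)) (at x)"
        by (rule has_derivative_sum) (rule gradb_deriv[OF rpos])
      then have "(g has_derivative (\<lambda>v. ki *\<^sub>R (\<Sum>j\<in>J. hessb k h (r j) (c j) x *v v))) (at x)"
        unfolding g_def by (rule has_derivative_scaleR_right)
      moreover have "(\<lambda>v. ki *\<^sub>R (\<Sum>j\<in>J. hessb k h (r j) (c j) x *v v)) = (\<lambda>v. H x *v v)"
        by (simp add: fun_eq_iff H_def mv_sum scaleR_matrix_vector_assoc[symmetric])
      ultimately show ?thesis by simp
    qed
    have cH: "continuous_on S H" for S
      unfolding H_def by (intro continuous_intros cont_hessb rpos)
    have cg: "continuous_on S g" for S
      unfolding g_def by (intro continuous_intros cont_gradb rpos)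
    have cw: "continuous_on S w" for S
      unfolding w_def by (intro continuous_intros cont_bump rpos)
    show "C2_closure \<Omega> w g H"
      unfolding C2_closure_def C2_on_def using dw dg cH cg cw by blast
    have wle: "w x \<le> C1 * (\<Sum>j\<in>J. \<Psi> (r j)) - C1 * Q" if "x \<in> closure \<Omega>" for x
    proof -
      have "(\<Sum>j\<in>J. bump k h (r j) (c j) x) \<le> (\<Sum>j\<in>J. Cp * \<Psi> (r j))"
        using bump_bd that by (intro sum_mono) auto
      then have "ki * (\<Sum>j\<in>J. bump k h (r j) (c j) x) \<le> ki * (\<Sum>j\<in>J. Cp * \<Psi> (r j))"
        using ki by (intro mult_left_mono) auto
      then show ?thesis by (simp add: w_def C1 sum_distrib_left mult_ac)
    qed
    show "\<forall>x\<in>closure \<Omega>. w x < 0"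
    proof
      fix x assume "x \<in> closure \<Omega>"
      have "C1 * (\<Sum>j\<in>J. \<Psi> (r j)) < C1 * Q" using sumJ C1 ki Cp by simp
      then show "w x < 0" using wle[OF \<open>x \<in> closure \<Omega>\<close>] by linarith
    qed
    show "\<forall>x\<in>closure \<Omega>. - ((4 * 2^k * (2^(k+1) * exp (real k))) * Q) \<le> w x"
    proof
      fix x assume "x \<in> closure \<Omega>"
      have "0 \<le> (\<Sum>j\<in>J. bump k h (r j) (c j) x)" using bump_bd \<open>x \<in> closure \<Omega>\<close> by (intro sum_nonneg) auto
      then have "0 \<le> ki * (\<Sum>j\<in>J. bump k h (r j) (c j) x)" using ki by simp
      then show "- ((4 * 2^k * (2^(k+1) * exp (real k))) * Q) \<le> w x" by (simp add: w_def C1_def)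
    qed
    show "\<forall>x\<in>\<Omega>. \<forall>u S. onf u S \<and> card S = k \<longrightarrow> indicator U x \<le> (\<Sum>i\<in>S. u i \<bullet> (H x *v u i)) - h * norm (g x)"
    proof (intro ballI allI impI)
      fix x and u :: "'n \<Rightarrow> real^'n" and S :: "'n set" assume x: "x \<in> \<Omega>" and uS: "onf u S \<and> card S = k"
      have xc: "x \<in> closure \<Omega>" using x closure_subset by blast
      define T where "T = (\<lambda>j. (\<Sum>i\<in>S. u i \<bullet> (hessb k h (r j) (c j) x *v u i)) - h * norm (gradb k h (r j) (c j) x))"
      define ind where "ind = (\<lambda>j. if norm (x - c j) < r j then 1 / (4 * 2^k) else (0::real))"
      have Tj: "ind j \<le> T j" if "j \<in> J" for j
        unfolding T_def ind_def
        by (rule bump_frame[OF rpos h htau[OF that xc] _ _ k1]) (use uS in auto)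
      have e1: "(\<Sum>i\<in>S. u i \<bullet> (H x *v u i)) = ki * (\<Sum>j\<in>J. \<Sum>i\<in>S. u i \<bullet> (hessb k h (r j) (c j) x *v u i))"
        by (simp add: H_def scaleR_matrix_vector_assoc[symmetric] mv_sum inner_sum_right sum_distrib_left
            sum.swap[of _ S J])
      have e2: "norm (g x) \<le> ki * (\<Sum>j\<in>J. norm (gradb k h (r j) (c j) x))"
        using ki norm_sum[of "\<lambda>j. gradb k h (r j) (c j) x" J] by (simp add: g_def)
      have "ki * (\<Sum>j\<in>J. T j) \<le> (\<Sum>i\<in>S. u i \<bullet> (H x *v u i)) - h * norm (g x)"
      proof -
        have "h * norm (g x) \<le> h * (ki * (\<Sum>j\<in>J. norm (gradb k h (r j) (c j) x)))"
          using e2 h by (intro mult_left_mono) auto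
        then show ?thesis
          by (simp add: e1 T_def sum_subtractf sum_distrib_left right_diff_distrib mult_ac)
      qed
      moreover have "indicator U x \<le> ki * (\<Sum>j\<in>J. ind j)"
      proof (cases "x \<in> U")
        case True
        then obtain j0 where j0: "j0 \<in> J" "x \<in> ball (c j0) (r j0)" by (auto simp: U_def)
        have "ind j0 \<le> (\<Sum>j\<in>J. ind j)"
          by (rule member_le_sum[OF j0(1)]) (auto simp: ind_def J(2))
        moreover have "ind j0 = 1 / (4 * 2^k)" using j0(2) by (simp add: ind_def dist_norm norm_minus_commute)
        ultimately have "ki * (1 / (4 * 2^k)) \<le> ki * (\<Sum>j\<in>J. ind j)" using ki by (intro mult_left_mono) auto
        then show ?thesis using True by (simp add: ki_def)
      next
        case False
        have "0 \<le> (\<Sum>j\<in>J. ind j)" by (intro sum_nonneg) (auto simp: ind_def)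
        then show ?thesis using False ki by simp
      qed
      moreover have "ki * (\<Sum>j\<in>J. ind j) \<le> ki * (\<Sum>j\<in>J. T j)"
        using Tj ki by (intro mult_left_mono sum_mono) auto
      ultimately show "indicator U x \<le> (\<Sum>i\<in>S. u i \<bullet> (H x *v u i)) - h * norm (g x)" by linarith
    qed
  qed
qed

lemma part1_strong:
  fixes \<Omega> E :: "(real^'n) set" and h Q :: real and k :: nat
  assumes kn: "k \<le> CARD('n)" and k1: "1 \<le> k"
    and \<Omega>: "open \<Omega>" "bounded \<Omega>" and E: "compact E" "E \<subseteq> \<Omega>"
    and h: "0 \<le> h" and hk: "h * diameter \<Omega> < real k"
    and Q: "ennreal Q > gen_hausdorff (Psi k (diameter \<Omega>)) E"
  shows "\<exists>U w g H. open U \<and> E \<subseteq> U \<and> compact (closure U) \<and> closure U \<subseteq> \<Omega> \<and>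
             C2_closure \<Omega> w g H \<and> (\<forall>x\<in>closure \<Omega>. w x < 0) \<and>
             (\<forall>x\<in>closure \<Omega>. - ((4 * 2^k * (2^(k+1) * exp (real k))) * Q) \<le> w x) \<and>
             (\<forall>x\<in>\<Omega>. \<forall>u S. onf u S \<and> card S = k \<longrightarrow>
                 indicator U x \<le> (\<Sum>i\<in>S. u i \<bullet> (H x *v u i)) - h * norm (g x))"
proof (cases "E = {}")
  case False
  then show ?thesis using construct[OF kn k1 \<Omega> E False h hk Q] by blast
next
  case True
  define C1 where "C1 = (4 * 2^k * (2^(k+1) * exp (real k)) :: real)"
  have C1: "C1 > 0" by (simp add: C1_def)
  have Qp: "Q > 0"
  proof -
    have "0 < ennreal Q" using Q by (metis not_gr_zero not_less_zero)
    then show ?thesis by simp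
  qed
  define w where "w = (\<lambda>x::real^'n. - (C1 * Q) / 2)"
  define g where "g = (\<lambda>x::real^'n. 0 :: real^'n)"
  define H where "H = (\<lambda>x::real^'n. 0 :: real^'n^'n)"
  show ?thesis
  proof (intro exI[of _ "{}"] exI[of _ w] exI[of _ g] exI[of _ H] conjI)
    show "C2_closure \<Omega> w g H"
      unfolding C2_closure_def C2_on_def w_def g_def H_def
      by (auto intro!: continuous_intros derivative_eq_intros)
    show "\<forall>x\<in>closure \<Omega>. w x < 0" using C1 Qp by (simp add: w_def)
    show "\<forall>x\<in>closure \<Omega>. - ((4 * 2^k * (2^(k+1) * exp (real k))) * Q) \<le> w x"
    proof
      fix x :: "real^'n"
      have "- (C1 * Q) \<le> w x" using C1 Qp by (simp add: w_def)
      then show "- ((4 * 2^k * (2^(k+1) * exp (real k))) * Q) \<le> w x" by (simp only: C1_def)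
    qed
    show "\<forall>x\<in>\<Omega>. \<forall>u S. onf u S \<and> card S = k \<longrightarrow>
                 indicator {} x \<le> (\<Sum>i\<in>S. u i \<bullet> (H x *v u i)) - h * norm (g x)"
      by (simp add: H_def g_def)
  qed (use True in auto)
qed

lemma mu_ge:
  fixes \<Omega> E U :: "(real^'n) set" and w :: "real^'n \<Rightarrow> real"
  assumes kn: "k \<le> CARD('n)" and CQ: "C > 0"
    and U: "open U" "E \<subseteq> U" "closure U \<subseteq> \<Omega>" and \<Omega>: "open \<Omega>"
    and C2: "C2_closure \<Omega> w g H" and neg: "\<forall>x\<in>closure \<Omega>. w x < 0"
    and lb: "\<forall>x\<in>closure \<Omega>. - C \<le> w x"
    and fb: "\<forall>x\<in>\<Omega>. \<forall>u S. onf u S \<and> card S = k \<longrightarrow>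
                 indicator U x \<le> (\<Sum>i\<in>S. u i \<bullet> (H x *v u i)) - h * norm (g x)"
  shows "ereal (1 / C) \<le> mu_set k h E"
proof -
  have UO: "U \<subseteq> \<Omega>" using U(3) closure_subset by blast
  have clUO: "closure U \<subseteq> closure \<Omega>" using UO by (rule closure_mono)
  have C2U: "C2_on U w g H" using C2 UO unfolding C2_closure_def by (auto intro: C2_on_subset)
  have vs: "visc_sub k h (1 / C) U w"
  proof (rule visc_lemma[OF U(1) C2U kn], intro ballI allI impI)
    fix x and u :: "'n \<Rightarrow> real^'n" and S :: "'n set"
    assume x: "x \<in> U" and uS: "onf u S \<and> card S = k"
    have "1 \<le> (\<Sum>i\<in>S. u i \<bullet> (H x *v u i)) - h * norm (g x)"
      using fb x UO uS by fastforce
    moreover have "- 1 \<le> (1 / C) * w x"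
    proof -
      have "x \<in> closure \<Omega>" using x clUO closure_subset by blast
      then have "- C \<le> w x" using lb by blast
      then show ?thesis using CQ by (simp add: field_simps)
    qed
    ultimately show "0 \<le> (\<Sum>i\<in>S. u i \<bullet> (H x *v u i)) - h * norm (g x) + 1 / C * w x" by linarith
  qed
  have cw: "continuous_on (closure U) w"
    using C2 clUO unfolding C2_closure_def by (auto intro: continuous_on_subset)
  have "1 / C \<in> {c. \<exists>w. usc_on (closure U) w \<and> (\<forall>x\<in>closure U. w x < 0) \<and> visc_sub k h c U w}"
    using usc_of_cont[OF cw] neg clUO vs by blast
  then have "ereal (1 / C) \<le> mu_open k h U" unfolding mu_open_def by (auto intro: Sup_upper)
  also have "mu_open k h U \<le> mu_set k h E" unfolding mu_set_def using U by (auto intro: SUP_upper)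
  finally show ?thesis .
qed

theorem mainTheorem6:
  fixes k :: nat and s :: real
  assumes n3: "CARD('n::finite) \<ge> 3"
    and k1: "1 \<le> k" and kn: "k \<le> CARD('n) - 1"
    and s0: "0 \<le> s" and sk: "s < real k"
  shows "\<exists>C1>0. \<forall>(\<Omega>::(real^'n) set) E h.
     open \<Omega> \<and> bounded \<Omega> \<and> compact E \<and> E \<subseteq> \<Omega> \<and>
     gen_hausdorff (Psi k (diameter \<Omega>)) E < \<infinity> \<and>
     0 \<le> h \<and> h * diameter \<Omega> = s \<longrightarrow>
       (\<forall>Q::real. ennreal Q > gen_hausdorff (Psi k (diameter \<Omega>)) E \<longrightarrow>
          (\<exists>U w g H. open U \<and> E \<subseteq> U \<and> compact (closure U) \<and> closure U \<subseteq> \<Omega> \<and>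
             C2_closure \<Omega> w g H \<and> (\<forall>x\<in>closure \<Omega>. w x < 0) \<and>
             (\<forall>x\<in>\<Omega>. Fk k h (H x) (g x) \<ge> indicator U x) \<and>
             (\<forall>x\<in>closure \<Omega>. \<bar>w x\<bar> \<le> C1 * Q) \<and>
             (\<forall>x\<in>U. Fk k h (H x) (g x) + (1 / (C1 * Q)) * w x \<ge> 0) \<and>
             (\<forall>x\<in>\<Omega>. Fk k h (H x) (g x) \<ge> 0))) \<and>
       (if gen_hausdorff (Psi k (diameter \<Omega>)) E = 0 then mu_set k h E = \<infinity>
        else mu_set k h E \<ge>
          ereal (1 / (C1 * enn2real (gen_hausdorff (Psi k (diameter \<Omega>)) E))))"
proof -
  define C1 where "C1 = (4 * 2^k * (2^(k+1) * exp (real k)) :: real)"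
  have C1: "C1 > 0" by (simp add: C1_def)
  have kn': "k \<le> CARD('n)" using kn by linarith
  have main: "open \<Omega> \<and> bounded \<Omega> \<and> compact E \<and> E \<subseteq> \<Omega> \<and>
     gen_hausdorff (Psi k (diameter \<Omega>)) E < \<infinity> \<and>
     0 \<le> h \<and> h * diameter \<Omega> = s \<longrightarrow>
       (\<forall>Q::real. ennreal Q > gen_hausdorff (Psi k (diameter \<Omega>)) E \<longrightarrow>
          (\<exists>U w g H. open U \<and> E \<subseteq> U \<and> compact (closure U) \<and> closure U \<subseteq> \<Omega> \<and>
             C2_closure \<Omega> w g H \<and> (\<forall>x\<in>closure \<Omega>. w x < 0) \<and>
             (\<forall>x\<in>\<Omega>. Fk k h (H x) (g x) \<ge> indicator U x) \<and>
             (\<forall>x\<in>closure \<Omega>. \<bar>w x\<bar> \<le> C1 * Q) \<and>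
             (\<forall>x\<in>U. Fk k h (H x) (g x) + (1 / (C1 * Q)) * w x \<ge> 0) \<and>
             (\<forall>x\<in>\<Omega>. Fk k h (H x) (g x) \<ge> 0))) \<and>
       (if gen_hausdorff (Psi k (diameter \<Omega>)) E = 0 then mu_set k h E = \<infinity>
        else mu_set k h E \<ge>
          ereal (1 / (C1 * enn2real (gen_hausdorff (Psi k (diameter \<Omega>)) E))))"
    for \<Omega> E :: "(real^'n) set" and h :: real
  proof (intro impI)
    assume A: "open \<Omega> \<and> bounded \<Omega> \<and> compact E \<and> E \<subseteq> \<Omega> \<and>
     gen_hausdorff (Psi k (diameter \<Omega>)) E < \<infinity> \<and> 0 \<le> h \<and> h * diameter \<Omega> = s"
    then have \<Omega>: "open \<Omega>" "bounded \<Omega>" and E: "compact E" "E \<subseteq> \<Omega>"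
      and fin: "gen_hausdorff (Psi k (diameter \<Omega>)) E < \<infinity>" and h: "0 \<le> h"
      and hk: "h * diameter \<Omega> < real k" using sk by auto
    define Hh where "Hh = gen_hausdorff (Psi k (diameter \<Omega>)) E"
    have strong: "\<exists>U w g H. open U \<and> E \<subseteq> U \<and> compact (closure U) \<and> closure U \<subseteq> \<Omega> \<and>
             C2_closure \<Omega> w g H \<and> (\<forall>x\<in>closure \<Omega>. w x < 0) \<and>
             (\<forall>x\<in>closure \<Omega>. - (C1 * Q) \<le> w x) \<and>
             (\<forall>x\<in>\<Omega>. \<forall>u S. onf u S \<and> card S = k \<longrightarrow>
                 indicator U x \<le> (\<Sum>i\<in>S. u i \<bullet> (H x *v u i)) - h * norm (g x))"
      if Q: "ennreal Q > Hh" for Q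
      using part1_strong[OF kn' k1 \<Omega> E h hk Q[unfolded Hh_def]] by (simp add: C1_def)
    have Qpos: "Q > 0" if Q: "ennreal Q > Hh" for Q
    proof -
      have "0 < ennreal Q" using Q by (metis not_gr_zero not_less_zero)
      then show ?thesis by simp
    qed
    have P1: "\<forall>Q::real. ennreal Q > Hh \<longrightarrow>
          (\<exists>U w g H. open U \<and> E \<subseteq> U \<and> compact (closure U) \<and> closure U \<subseteq> \<Omega> \<and>
             C2_closure \<Omega> w g H \<and> (\<forall>x\<in>closure \<Omega>. w x < 0) \<and>
             (\<forall>x\<in>\<Omega>. Fk k h (H x) (g x) \<ge> indicator U x) \<and>
             (\<forall>x\<in>closure \<Omega>. \<bar>w x\<bar> \<le> C1 * Q) \<and>
             (\<forall>x\<in>U. Fk k h (H x) (g x) + (1 / (C1 * Q)) * w x \<ge> 0) \<and>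
             (\<forall>x\<in>\<Omega>. Fk k h (H x) (g x) \<ge> 0))"
    proof (intro allI impI)
      fix Q :: real assume Q: "ennreal Q > Hh"
      have Qp: "Q > 0" by (rule Qpos[OF Q])
      obtain U w g H where UW: "open U" "E \<subseteq> U" "compact (closure U)" "closure U \<subseteq> \<Omega>"
          "C2_closure \<Omega> w g H" "\<forall>x\<in>closure \<Omega>. w x < 0" "\<forall>x\<in>closure \<Omega>. - (C1 * Q) \<le> w x"
          "\<forall>x\<in>\<Omega>. \<forall>u S. onf u S \<and> card S = k \<longrightarrow>
                 indicator U x \<le> (\<Sum>i\<in>S. u i \<bullet> (H x *v u i)) - h * norm (g x)"
        using strong[OF Q] by blast
      have C2: "C2_on \<Omega> w g H" using UW(5) by (simp add: C2_closure_def)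
      have FkI: "indicator U x \<le> Fk k h (H x) (g x)" if x: "x \<in> \<Omega>" for x
      proof (rule Fk_ge[OF _ kn'])
        show "transpose (H x) = H x"
          using hess_transpose[OF \<Omega>(1) x] C2 unfolding C2_on_def by blast
        show "\<forall>u S. onf u S \<and> card S = k \<longrightarrow> indicator U x \<le> (\<Sum>i\<in>S. u i \<bullet> (H x *v u i)) - h * norm (g x)"
          using UW(8) x by blast
      qed
      have UO: "U \<subseteq> \<Omega>" using UW(4) closure_subset by blast
      show "\<exists>U w g H. open U \<and> E \<subseteq> U \<and> compact (closure U) \<and> closure U \<subseteq> \<Omega> \<and>
             C2_closure \<Omega> w g H \<and> (\<forall>x\<in>closure \<Omega>. w x < 0) \<and>
             (\<forall>x\<in>\<Omega>. Fk k h (H x) (g x) \<ge> indicator U x) \<and>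
             (\<forall>x\<in>closure \<Omega>. \<bar>w x\<bar> \<le> C1 * Q) \<and>
             (\<forall>x\<in>U. Fk k h (H x) (g x) + (1 / (C1 * Q)) * w x \<ge> 0) \<and>
             (\<forall>x\<in>\<Omega>. Fk k h (H x) (g x) \<ge> 0)"
      proof (intro exI[of _ U] exI[of _ w] exI[of _ g] exI[of _ H] conjI ballI)
        fix x assume x: "x \<in> closure \<Omega>"
        show "\<bar>w x\<bar> \<le> C1 * Q" using UW(6,7) x by fastforce
      next
        fix x assume x: "x \<in> U"
        then have xO: "x \<in> \<Omega>" using UO by blast
        have "1 \<le> Fk k h (H x) (g x)" using FkI[OF xO] x by simp
        moreover have "- 1 \<le> (1 / (C1 * Q)) * w x"
        proof -
          have "- (C1 * Q) \<le> w x" using UW(7) xO closure_subset by blast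
          then show ?thesis using C1 Qp by (simp add: field_simps)
        qed
        ultimately show "Fk k h (H x) (g x) + (1 / (C1 * Q)) * w x \<ge> 0" by linarith
      next
        fix x assume x: "x \<in> \<Omega>"
        show "Fk k h (H x) (g x) \<ge> 0" using FkI[OF x] by (rule order_trans[rotated]) simp
      qed (use UW FkI in auto)
    qed
    have muQ: "ereal (1 / (C1 * Q)) \<le> mu_set k h E" if Q: "ennreal Q > Hh" for Q
    proof -
      have Qp: "Q > 0" by (rule Qpos[OF Q])
      obtain U w g H where UW: "open U" "E \<subseteq> U" "compact (closure U)" "closure U \<subseteq> \<Omega>"
          "C2_closure \<Omega> w g H" "\<forall>x\<in>closure \<Omega>. w x < 0" "\<forall>x\<in>closure \<Omega>. - (C1 * Q) \<le> w x"
          "\<forall>x\<in>\<Omega>. \<forall>u S. onf u S \<and> card S = k \<longrightarrow>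
                 indicator U x \<le> (\<Sum>i\<in>S. u i \<bullet> (H x *v u i)) - h * norm (g x)"
        using strong[OF Q] by blast
      show ?thesis
        by (rule mu_ge[OF kn' _ UW(1) UW(2) UW(4) \<Omega>(1) UW(5) UW(6) UW(7) UW(8)]) (use C1 Qp in simp)
    qed
    obtain x where x: "0 \<le> x" "Hh = ennreal x"
      using fin unfolding Hh_def by (cases "gen_hausdorff (Psi k (diameter \<Omega>)) E" rule: ennreal_cases) auto
    have muQ': "ereal (1 / (C1 * Q)) \<le> mu_set k h E" if "Q > x" for Q
      using muQ[of Q] that x by (simp add: ennreal_less_iff)
    have P2: "if Hh = 0 then mu_set k h E = \<infinity> else mu_set k h E \<ge> ereal (1 / (C1 * enn2real Hh))"
    proof (cases "Hh = 0")
      case True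
      then have x0: "x = 0" using x by simp
      have "mu_set k h E = \<infinity>"
      proof (rule ccontr)
        assume "mu_set k h E \<noteq> \<infinity>"
        then have "mu_set k h E < \<infinity>" by (simp add: less_top)
        then obtain m where m: "mu_set k h E < ereal m" using ereal_dense2 by blast
        define M where "M = max m 1"
        have M: "M > 0" "m \<le> M" by (auto simp: M_def)
        have "ereal (1 / (C1 * (1 / (C1 * M)))) \<le> mu_set k h E"
          by (rule muQ') (use x0 C1 M in simp)
        then have "ereal M \<le> mu_set k h E" using C1 M by simp
        then show False using m M by (meson ereal_less_eq(3) leD order.strict_trans2)
      qed
      then show ?thesis using True by simp
    next
      case False
      then have xp: "x > 0" using x by (auto simp: less_le)
      have e: "enn2real Hh = x" using x by simp
      have "ereal (1 / (C1 * x)) \<le> mu_set k h E"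
      proof (rule ccontr)
        assume "\<not> ereal (1 / (C1 * x)) \<le> mu_set k h E"
        then have "mu_set k h E < ereal (1 / (C1 * x))" by simp
        then obtain z where z: "mu_set k h E < ereal z" "ereal z < ereal (1 / (C1 * x))"
          using ereal_dense2 by blast
        have pos: "ereal (1 / (C1 * (x + 1))) \<le> mu_set k h E" by (rule muQ') simp
        have "0 < 1 / (C1 * (x + 1))" using C1 xp by simp
        moreover have "ereal (1 / (C1 * (x + 1))) < ereal z" using pos z(1) by (rule le_less_trans)
        then have "1 / (C1 * (x + 1)) < z" by simp
        ultimately have zp: "z > 0" by linarith
        have zx: "z < 1 / (C1 * x)" using z(2) by simp
        then have "x < 1 / (C1 * z)" using C1 xp zp by (simp add: field_simps)
        then have "ereal (1 / (C1 * (1 / (C1 * z)))) \<le> mu_set k h E" by (rule muQ')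
        then have "ereal z \<le> mu_set k h E" using C1 zp by simp
        then show False using z(1) by simp
      qed
      then show ?thesis using False e by simp
    qed
    show "(\<forall>Q::real. ennreal Q > gen_hausdorff (Psi k (diameter \<Omega>)) E \<longrightarrow>
          (\<exists>U w g H. open U \<and> E \<subseteq> U \<and> compact (closure U) \<and> closure U \<subseteq> \<Omega> \<and>
             C2_closure \<Omega> w g H \<and> (\<forall>x\<in>closure \<Omega>. w x < 0) \<and>
             (\<forall>x\<in>\<Omega>. Fk k h (H x) (g x) \<ge> indicator U x) \<and>
             (\<forall>x\<in>closure \<Omega>. \<bar>w x\<bar> \<le> C1 * Q) \<and>
             (\<forall>x\<in>U. Fk k h (H x) (g x) + (1 / (C1 * Q)) * w x \<ge> 0) \<and>
             (\<forall>x\<in>\<Omega>. Fk k h (H x) (g x) \<ge> 0))) \<and>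
       (if gen_hausdorff (Psi k (diameter \<Omega>)) E = 0 then mu_set k h E = \<infinity>
        else mu_set k h E \<ge>
          ereal (1 / (C1 * enn2real (gen_hausdorff (Psi k (diameter \<Omega>)) E))))"
      using P1 P2 unfolding Hh_def by blast
  qed
  show ?thesis using C1 main by blast
qed

end
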